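(* Let $E\in\mathcal Q$ be a quasi-regular hexagon and let $P\notin\mathcal Q$ be a polyiamond with $\|P\|\ge\|E\|$. Then $p(P)>p(E)$ and $s(P)>s(E)$.
   Context: Faces are the closed triangular faces of the triangular lattice $\mathbb T^2$ in $\mathbb R^2$. A polyiamond $P$ is a finite nonempty union of faces that is connected through shared edges (two faces sharing only a vertex are not adjacent); faces not in $P$ are empty faces. Its area $\|P\|$ is the number of its faces; its edge-perimeter $p(P)$ is the number of edges of $\mathbb T^2$ separating a face of $P$ from an empty face; its site-perimeter $s(P)$ is the number of empty faces sharing at least one edge with a face of $P$. For integers $d\ge1$, $a,b,c\ge0$ with $a+b,b+c,c+a\le d$, $T^d_{a,b,c}$ is the polyiamond obtained from an equilateral triangle of side length $d$ with sides on lattice lines (the union of its $d^2$ faces) by removing the equilateral sub-triangles of side lengths $a,b,c$ at its three corners; its boundary is a (possibly degenerate) hexagon with side lengths, in cyclic order, $a,\ d-a-b,\ b,\ d-b-c,\ c,\ d-c-a$, its area is $d^2-a^2-b^2-c^2$ and its edge- and site-perimeter equal $3d-a-b-c$. Quasi-regular hexagons: for $r\ge1$ let $E(r)=T^{3r}_{r,r,r}$ (regular hexagon of side $r$), $E_{B_1}(r)=T^{3r}_{r-1,r,r}$, $E_{B_2}(r)=T^{3r+1}_{r,r,r+1}$, $E_{B_3}(r)=T^{3r+1}_{r,r,r}$, $E_{B_4}(r)=T^{3r+2}_{r,r+1,r+1}$, $E_{B_5}(r)=T^{3r+2}_{r,r,r+1}$. Their areas are $6r^2,\ 6r^2+2r-1,\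 6r^2+4r,\ 6r^2+6r+1,\ 6r^2+8r+2,\ 6r^2+10r+3$, and their edge-perimeters (equal to their site-perimeters) are $6r,6r+1,\dots,6r+5$. A quasi-regular hexagon is any image of one of these under a symmetry (translation, rotation, reflection) of $\mathbb T^2$; $\mathcal Q$ denotes the set of all quasi-regular hexagons. *)

theory Defs
  imports Main
begin

text \<open>Triangular lattice in lattice coordinates: vertex (x,y) stands for x*e1 + y*e2 with
  e1 = (1,0), e2 = (1/2, sqrt 3/2).  A face is (v, up) where for up = True it is the triangle
  with vertices v, v+e1, v+e2 and for up = False the triangle v+e1, v+e2, v+e1+e2.\<close>

type_synonym vertex = "int \<times> int"
type_synonym face = "vertex \<times> bool"

fun verts :: "face \<Rightarrow> vertex set" where
  "verts ((x, y), True) = {(x, y), (x + 1, y), (x, y + 1)}"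
| "verts ((x, y), False) = {(x + 1, y), (x, y + 1), (x + 1, y + 1)}"

definition adjacent :: "face \<Rightarrow> face \<Rightarrow> bool" where
  "adjacent f g \<longleftrightarrow> card (verts f \<inter> verts g) = 2"

definition face_connected :: "face set \<Rightarrow> bool" where
  "face_connected P \<longleftrightarrow>
     (\<forall>f\<in>P. \<forall>g\<in>P. (f, g) \<in> {(a, b). a \<in> P \<and> b \<in> P \<and> adjacent a b}\<^sup>*)"

definition polyiamond :: "face set \<Rightarrow> bool" where
  "polyiamond P \<longleftrightarrow> finite P \<and> P \<noteq> {} \<and> face_connected P"

definition area :: "face set \<Rightarrow> nat" where
  "area P = card P"

text \<open>Edges are represented by their two endpoint vertices.\<close>
definition edge_perimeter :: "face set \<Rightarrow> nat" where
  "edge_perimeter P = card {verts f \<inter> verts g | f g. f \<in> P \<and> g \<notin> P \<and> adjacent f g}"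

definition site_perimeter :: "face set \<Rightarrow> nat" where
  "site_perimeter P = card {g. g \<notin> P \<and> (\<exists>f\<in>P. adjacent f g)}"

text \<open>T^d_{a,b,c}: the big triangle with vertices (0,0),(d,0),(0,d) with corner triangles of
  side a at (0,0), b at (d,0), c at (0,d) removed. A (closed) face lies in this convex region iff
  all its vertices do.\<close>
definition in_hex_region :: "nat \<Rightarrow> nat \<Rightarrow> nat \<Rightarrow> nat \<Rightarrow> vertex \<Rightarrow> bool" where
  "in_hex_region d a b c v \<longleftrightarrow>
     (let x = fst v; y = snd v in
        0 \<le> x \<and> 0 \<le> y \<and> x + y \<le> int d \<and> int a \<le> x + y \<and> x \<le> int d - int b \<and> y \<le> int d - int c)"

definition T_hex :: "nat \<Rightarrow> nat \<Rightarrow> nat \<Rightarrow> nat \<Rightarrow> face set" where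
  "T_hex d a b c = {f. \<forall>v\<in>verts f. in_hex_region d a b c v}"

definition E0 :: "nat \<Rightarrow> face set" where "E0 r = T_hex (3*r) r r r"
definition EB1 :: "nat \<Rightarrow> face set" where "EB1 r = T_hex (3*r) (r - 1) r r"
definition EB2 :: "nat \<Rightarrow> face set" where "EB2 r = T_hex (3*r+1) r r (r+1)"
definition EB3 :: "nat \<Rightarrow> face set" where "EB3 r = T_hex (3*r+1) r r r"
definition EB4 :: "nat \<Rightarrow> face set" where "EB4 r = T_hex (3*r+2) r (r+1) (r+1)"
definition EB5 :: "nat \<Rightarrow> face set" where "EB5 r = T_hex (3*r+2) r r (r+1)"

text \<open>Symmetries of the triangular lattice: rotation by 60 degrees (e1 -> e2, e2 -> e2 - e1),
  reflection swapping e1 and e2, and translations.\<close>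
definition rot60 :: "vertex \<Rightarrow> vertex" where
  "rot60 v = (- snd v, fst v + snd v)"

definition refl :: "vertex \<Rightarrow> vertex" where
  "refl v = (snd v, fst v)"

definition vadd :: "vertex \<Rightarrow> vertex \<Rightarrow> vertex" where
  "vadd v t = (fst v + fst t, snd v + snd t)"

definition lattice_symmetries :: "(vertex \<Rightarrow> vertex) set" where
  "lattice_symmetries =
     {(\<lambda>v. vadd ((rot60 ^^ k) v) t) | k t. k < 6} \<union> {(\<lambda>v. vadd ((rot60 ^^ k) (refl v)) t) | k t. k < 6}"

definition face_image :: "(vertex \<Rightarrow> vertex) \<Rightarrow> face set \<Rightarrow> face set" where
  "face_image \<sigma> P = {g. \<exists>f\<in>P. verts g = \<sigma> ` verts f}"

definition quasi_regular :: "face set set" where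
  "quasi_regular = {face_image \<sigma> H | \<sigma> H r. \<sigma> \<in> lattice_symmetries \<and> r \<ge> 1 \<and>
      H \<in> {E0 r, EB1 r, EB2 r, EB3 r, EB4 r, EB5 r}}"

end

theory Submission
  imports Defs
begin


definition fx :: "face \<Rightarrow> int" where "fx f = fst (fst f)"
definition fy :: "face \<Rightarrow> int" where "fy f = snd (fst f)"
definition fz :: "face \<Rightarrow> int" where "fz f = fst (fst f) + snd (fst f) + (if snd f then 0 else 1)"

lemma fxyz_simps[simp]:
  "fx ((x,y),u) = x" "fy ((x,y),u) = y" "fz ((x,y),u) = x + y + (if u then 0 else 1)"
  by (auto simp: fx_def fy_def fz_def)

lemma face_eqI: "fx f = fx g \<Longrightarrow> fy f = fy g \<Longrightarrow> fz f = fz g \<Longrightarrow> f = g"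
  by (cases f; cases g) (auto simp: fx_def fy_def fz_def split: if_splits)

lemma fz_range: "fx f + fy f \<le> fz f \<and> fz f \<le> fx f + fy f + 1"
  by (cases f) (auto simp: fx_def fy_def fz_def)

lemma verts_xrange: "v \<in> verts ((x,y),u) \<Longrightarrow> x \<le> fst v \<and> fst v \<le> x + 1 \<and> y \<le> snd v \<and> snd v \<le> y + 1"
  by (cases u) auto

lemma card_verts_int_far:
  assumes "x' \<notin> {x-1, x, x+1} \<or> y' \<notin> {y-1,y,y+1}"
  shows "verts ((x,y),u) \<inter> verts ((x',y'),u') = {}"
proof -
  { fix v assume "v \<in> verts ((x,y),u)" "v \<in> verts ((x',y'),u')"
    from verts_xrange[OF this(1)] verts_xrange[OF this(2)] assms have False by auto }
  then show ?thesis by blast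
qed

lemma adj_cases:
  "adjacent ((x,y),u) ((x',y'),u') \<longleftrightarrow>
    (u \<and> \<not>u' \<and> ((x',y') = (x,y-1) \<or> (x',y') = (x-1,y) \<or> (x',y') = (x,y))) \<or>
    (\<not>u \<and> u' \<and> ((x',y') = (x,y) \<or> (x',y') = (x+1,y) \<or> (x',y') = (x,y+1)))"
proof (cases "x' \<notin> {x-1, x, x+1} \<or> y' \<notin> {y-1,y,y+1}")
  case True
  then show ?thesis unfolding adjacent_def using card_verts_int_far[OF True, of u u'] by auto
next
  case False
  then have "(x' = x-1 \<or> x' = x \<or> x' = x+1) \<and> (y' = y-1 \<or> y' = y \<or> y' = y+1)" by auto
  then show ?thesis unfolding adjacent_def
    by (cases u; cases u') (auto simp: card_insert_if)
qed

lemma adjacent_sym: "adjacent f g \<longleftrightarrow> adjacent g f"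
  unfolding adjacent_def by (simp add: Int_commute)

lemma adjacent_irrefl: "\<not> adjacent f f"
  unfolding adjacent_def by (cases f) (cases "snd f"; auto simp: card_insert_if)

lemma face_ex: "\<exists>x y u. f = ((x,y),u)" by (metis prod.collapse)

definition nbr :: "face \<Rightarrow> face \<Rightarrow> bool" where
  "nbr f g \<longleftrightarrow> (fx f = fx g \<and> fy f = fy g \<and> \<bar>fz f - fz g\<bar> = 1) \<or>
     (fx f = fx g \<and> fz f = fz g \<and> \<bar>fy f - fy g\<bar> = 1) \<or>
     (fy f = fy g \<and> fz f = fz g \<and> \<bar>fx f - fx g\<bar> = 1)"

lemma adjacent_nbr: "adjacent f g \<longleftrightarrow> nbr f g"
proof -
  obtain x y u where f: "f = ((x,y),u)" using face_ex[of f] by blast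
  obtain x' y' u' where g: "g = ((x',y'),u')" using face_ex[of g] by blast
  show ?thesis unfolding f g adj_cases nbr_def by (cases u; cases u'; auto)
qed

lemma edge_h: "{(x,y),(x+1,y)} \<subseteq> verts h \<Longrightarrow> h = ((x,y),True) \<or> h = ((x,y-1),False)"
  using face_ex[of h] by (elim exE) (case_tac u; auto)
lemma edge_v: "{(x,y),(x,y+1)} \<subseteq> verts h \<Longrightarrow> h = ((x,y),True) \<or> h = ((x-1,y),False)"
  using face_ex[of h] by (elim exE) (case_tac u; auto)
lemma edge_d: "{(x+1,y),(x,y+1)} \<subseteq> verts h \<Longrightarrow> h = ((x,y),True) \<or> h = ((x,y),False)"
  using face_ex[of h] by (elim exE) (case_tac u; auto)

lemma edge_two_faces:
  assumes "adjacent f g" "verts f \<inter> verts g \<subseteq> verts h"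
  shows "h = f \<or> h = g"
proof -
  obtain x y u where f: "f = ((x,y),u)" using face_ex[of f] by blast
  obtain x' y' u' where g: "g = ((x',y'),u')" using face_ex[of g] by blast
  show ?thesis
  proof (cases u)
    case True
    with assms(1) have "(x',y') = (x,y-1) \<and> \<not>u' \<or> (x',y') = (x-1,y) \<and> \<not>u' \<or> (x',y') = (x,y) \<and> \<not>u'"
      unfolding f g adj_cases by auto
    then show ?thesis
    proof (elim disjE conjE)
      assume a: "(x',y') = (x,y-1)" "\<not>u'"
      then have "{(x,y),(x+1,y)} \<subseteq> verts h" using assms(2) True unfolding f g by auto
      from edge_h[OF this] show ?thesis using a True unfolding f g by auto
    next
      assume a: "(x',y') = (x-1,y)" "\<not>u'"
      then have "{(x,y),(x,y+1)} \<subseteq> verts h" using assms(2) True unfolding f g by auto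
      from edge_v[OF this] show ?thesis using a True unfolding f g by auto
    next
      assume a: "(x',y') = (x,y)" "\<not>u'"
      then have "{(x+1,y),(x,y+1)} \<subseteq> verts h" using assms(2) True unfolding f g by auto
      from edge_d[OF this] show ?thesis using a True unfolding f g by auto
    qed
  next
    case False
    with assms(1) have "(x',y') = (x,y) \<and> u' \<or> (x',y') = (x+1,y) \<and> u' \<or> (x',y') = (x,y+1) \<and> u'"
      unfolding f g adj_cases by auto
    then show ?thesis
    proof (elim disjE conjE)
      assume a: "(x',y') = (x,y)" "u'"
      then have "{(x+1,y),(x,y+1)} \<subseteq> verts h" using assms(2) False unfolding f g by auto
      from edge_d[OF this] show ?thesis using a False unfolding f g by auto
    next
      assume a: "(x',y') = (x+1,y)" "u'"
      then have "{(x+1,y),(x+1,y+1)} \<subseteq> verts h" using assms(2) False unfolding f g by auto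
      from edge_v[of "x+1" y h] this show ?thesis using a False unfolding f g by auto
    next
      assume a: "(x',y') = (x,y+1)" "u'"
      then have "{(x,y+1),(x+1,y+1)} \<subseteq> verts h" using assms(2) False unfolding f g by auto
      from edge_h[of x "y+1" h] this show ?thesis using a False unfolding f g by auto
    qed
  qed
qed

definition BP :: "face set \<Rightarrow> (face \<times> face) set" where
  "BP P = {(f,g). f \<in> P \<and> g \<notin> P \<and> adjacent f g}"

definition SP :: "face set \<Rightarrow> face set" where
  "SP P = {g. g \<notin> P \<and> (\<exists>f\<in>P. adjacent f g)}"

lemma nbrs_finite: "finite {g. adjacent f g}"
proof -
  obtain x y u where f: "f = ((x,y),u)" using face_ex[of f] by blast
  have "{g. adjacent f g} \<subseteq> {((x,y-1),False), ((x-1,y),False), ((x,y),False), ((x+1,y),True), ((x,y+1),True), ((x,y),True)}"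
  proof
    fix g assume "g \<in> {g. adjacent f g}"
    moreover obtain x' y' u' where g: "g = ((x',y'),u')" using face_ex[of g] by blast
    ultimately show "g \<in> {((x,y-1),False), ((x-1,y),False), ((x,y),False), ((x+1,y),True), ((x,y+1),True), ((x,y),True)}"
      by (simp add: f g adj_cases) (auto)
  qed
  then show ?thesis by (rule finite_subset) simp
qed

lemma finite_BP: "finite P \<Longrightarrow> finite (BP P)"
proof -
  assume "finite P"
  have "BP P \<subseteq> (\<Union>f\<in>P. {f} \<times> {g. adjacent f g})" unfolding BP_def by auto
  moreover have "finite (\<Union>f\<in>P. {f} \<times> {g. adjacent f g})"
    using \<open>finite P\<close> nbrs_finite by auto
  ultimately show ?thesis by (meson finite_subset)
qed

lemma finite_SP: "finite P \<Longrightarrow> finite (SP P)"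
proof -
  assume "finite P"
  have "SP P \<subseteq> (\<Union>f\<in>P. {g. adjacent f g})" unfolding SP_def by auto
  moreover have "finite (\<Union>f\<in>P. {g. adjacent f g})"
    using \<open>finite P\<close> nbrs_finite by auto
  ultimately show ?thesis by (meson finite_subset)
qed

lemma edge_perimeter_BP: "edge_perimeter P = card (BP P)"
proof -
  have eq: "{verts f \<inter> verts g | f g. f \<in> P \<and> g \<notin> P \<and> adjacent f g} = (\<lambda>(f,g). verts f \<inter> verts g) ` BP P"
    unfolding BP_def by fast
  have "inj_on (\<lambda>(f,g). verts f \<inter> verts g) (BP P)"
  proof (rule inj_onI, clarify)
    fix f g f' g' assume a: "(f,g) \<in> BP P" "(f',g') \<in> BP P" "verts f \<inter> verts g = verts f' \<inter> verts g'"
    from a have ad: "adjacent f g" "adjacent f' g'" and m: "f \<in> P" "g \<notin> P" "f' \<in> P" "g' \<notin> P"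
      unfolding BP_def by auto
    have "f' = f \<or> f' = g" using edge_two_faces[OF ad(1), of f'] a(3) by auto
    moreover have "g' = f \<or> g' = g" using edge_two_faces[OF ad(1), of g'] a(3) by auto
    ultimately show "f = f' \<and> g = g'" using m by auto
  qed
  then show ?thesis unfolding edge_perimeter_def eq by (rule card_image)
qed

lemma site_perimeter_SP: "site_perimeter P = card (SP P)"
  unfolding site_perimeter_def SP_def by simp



locale strip =
  fixes key :: "face \<Rightarrow> int" and pos :: "face \<Rightarrow> int" and succ :: "face \<Rightarrow> face" and pred :: "face \<Rightarrow> face"
  assumes key_succ[simp]: "key (succ f) = key f"
    and pos_succ[simp]: "pos (succ f) = pos f + 1"
    and pred_succ[simp]: "pred (succ f) = f"
    and succ_pred[simp]: "succ (pred f) = f"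
    and kp_inj: "key f = key g \<Longrightarrow> pos f = pos g \<Longrightarrow> f = g"
    and adj_succ: "adjacent f (succ f)"
begin

lemma key_pred[simp]: "key (pred f) = key f"
  by (metis key_succ succ_pred)
lemma pos_pred[simp]: "pos (pred f) = pos f - 1"
  by (metis add_diff_cancel_right' pos_succ succ_pred)
lemma adj_pred: "adjacent f (pred f)"
  by (metis adj_succ adjacent_sym succ_pred)

definition lo :: "face set \<Rightarrow> (face \<times> face) set" where
  "lo P = {(f, pred f) | f. f \<in> P \<and> (\<forall>h\<in>P. key h = key f \<longrightarrow> pos f \<le> pos h)}"
definition hi :: "face set \<Rightarrow> (face \<times> face) set" where
  "hi P = {(f, succ f) | f. f \<in> P \<and> (\<forall>h\<in>P. key h = key f \<longrightarrow> pos h \<le> pos f)}"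
definition ends :: "face set \<Rightarrow> (face \<times> face) set" where
  "ends P = lo P \<union> hi P"

lemma ends_BP: "ends P \<subseteq> BP P"
proof
  fix p assume "p \<in> ends P"
  then show "p \<in> BP P" unfolding ends_def lo_def hi_def BP_def
  proof (elim UnE CollectE exE conjE)
    fix f assume "p = (f, pred f)" "f \<in> P" "\<forall>h\<in>P. key h = key f \<longrightarrow> pos f \<le> pos h"
    then show "p \<in> {(f, g). f \<in> P \<and> g \<notin> P \<and> adjacent f g}"
      using adj_pred[of f] by force
  next
    fix f assume "p = (f, succ f)" "f \<in> P" "\<forall>h\<in>P. key h = key f \<longrightarrow> pos h \<le> pos f"
    then show "p \<in> {(f, g). f \<in> P \<and> g \<notin> P \<and> adjacent f g}"
      using adj_succ[of f] by force
  qed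
qed

lemma ends_key: "(f,g) \<in> ends P \<Longrightarrow> key g = key f"
  unfolding ends_def lo_def hi_def by auto

lemma ends_pred_succ: "(f,g) \<in> ends P \<Longrightarrow> g = pred f \<or> g = succ f"
  unfolding ends_def lo_def hi_def by auto

lemma mins_ex:
  assumes "finite P" "k \<in> key ` P"
  shows "\<exists>f\<in>P. key f = k \<and> (\<forall>h\<in>P. key h = k \<longrightarrow> pos f \<le> pos h)"
proof -
  let ?S = "{h\<in>P. key h = k}"
  have fin: "finite (pos ` ?S)" using assms(1) by simp
  have ne: "pos ` ?S \<noteq> {}" using assms(2) by auto
  obtain f where f: "f \<in> ?S" "pos f = Min (pos ` ?S)" using Min_in[OF fin ne] by auto
  show ?thesis using f Min_le[OF fin] by auto
qed

lemma maxs_ex: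
  assumes "finite P" "k \<in> key ` P"
  shows "\<exists>f\<in>P. key f = k \<and> (\<forall>h\<in>P. key h = k \<longrightarrow> pos h \<le> pos f)"
proof -
  let ?S = "{h\<in>P. key h = k}"
  have fin: "finite (pos ` ?S)" using assms(1) by simp
  have ne: "pos ` ?S \<noteq> {}" using assms(2) by auto
  obtain f where f: "f \<in> ?S" "pos f = Max (pos ` ?S)" using Max_in[OF fin ne] by auto
  show ?thesis using f Max_ge[OF fin] by auto
qed

lemma card_lo: "finite P \<Longrightarrow> card (lo P) = card (key ` P)"
proof -
  assume fin: "finite P"
  let ?M = "{f\<in>P. \<forall>h\<in>P. key h = key f \<longrightarrow> pos f \<le> pos h}"
  have "lo P = (\<lambda>f. (f, pred f)) ` ?M" unfolding lo_def by auto
  moreover have "inj_on (\<lambda>f. (f, pred f)) ?M" by (rule inj_onI) auto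
  ultimately have "card (lo P) = card ?M" by (simp add: card_image)
  also have "card ?M = card (key ` ?M)"
  proof (rule card_image[symmetric], rule inj_onI)
    fix f g assume "f \<in> ?M" "g \<in> ?M" "key f = key g"
    then have "pos f = pos g" by (metis (mono_tags, lifting) mem_Collect_eq order_antisym)
    then show "f = g" using kp_inj \<open>key f = key g\<close> by blast
  qed
  also have "key ` ?M = key ` P"
  proof
    show "key ` ?M \<subseteq> key ` P" by auto
    show "key ` P \<subseteq> key ` ?M"
    proof
      fix k assume "k \<in> key ` P"
      from mins_ex[OF fin this] obtain f where "f\<in>P" "key f = k" "\<forall>h\<in>P. key h = k \<longrightarrow> pos f \<le> pos h" by blast
      then show "k \<in> key ` ?M" by auto
    qed
  qed
  finally show ?thesis .
qed

lemma card_hi: "finite P \<Longrightarrow> card (hi P) = card (key ` P)"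
proof -
  assume fin: "finite P"
  let ?M = "{f\<in>P. \<forall>h\<in>P. key h = key f \<longrightarrow> pos h \<le> pos f}"
  have "hi P = (\<lambda>f. (f, succ f)) ` ?M" unfolding hi_def by auto
  moreover have "inj_on (\<lambda>f. (f, succ f)) ?M" by (rule inj_onI) auto
  ultimately have "card (hi P) = card ?M" by (simp add: card_image)
  also have "card ?M = card (key ` ?M)"
  proof (rule card_image[symmetric], rule inj_onI)
    fix f g assume "f \<in> ?M" "g \<in> ?M" "key f = key g"
    then have "pos f = pos g" by (metis (mono_tags, lifting) mem_Collect_eq order_antisym)
    then show "f = g" using kp_inj \<open>key f = key g\<close> by blast
  qed
  also have "key ` ?M = key ` P"
  proof
    show "key ` ?M \<subseteq> key ` P" by auto
    show "key ` P \<subseteq> key ` ?M"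
    proof
      fix k assume "k \<in> key ` P"
      from maxs_ex[OF fin this] obtain f where "f\<in>P" "key f = k" "\<forall>h\<in>P. key h = k \<longrightarrow> pos h \<le> pos f" by blast
      then show "k \<in> key ` ?M" by auto
    qed
  qed
  finally show ?thesis .
qed

lemma lo_hi_disj: "lo P \<inter> hi P = {}"
proof -
  { fix f g assume "(f,g) \<in> lo P" "(f,g) \<in> hi P"
    then have "g = pred f" "g = succ f" unfolding lo_def hi_def by auto
    then have "pos f - 1 = pos f + 1" by (metis pos_pred pos_succ)
    then have False by simp }
  then show ?thesis by auto
qed

lemma finite_lo: "finite P \<Longrightarrow> finite (lo P)"
  unfolding lo_def by (rule finite_subset[of _ "(\<lambda>f. (f, pred f)) ` P"]) auto
lemma finite_hi: "finite P \<Longrightarrow> finite (hi P)"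
  unfolding hi_def by (rule finite_subset[of _ "(\<lambda>f. (f, succ f)) ` P"]) auto

lemma card_ends: "finite P \<Longrightarrow> card (ends P) = 2 * card (key ` P)"
  unfolding ends_def using card_Un_disjoint[OF finite_lo finite_hi lo_hi_disj] card_lo card_hi by simp

lemma finite_ends: "finite P \<Longrightarrow> finite (ends P)"
  unfolding ends_def using finite_lo finite_hi by auto

lemma inj_snd_ends: "inj_on snd (ends P)"
proof (rule inj_onI)
  fix p q assume p: "p \<in> ends P" and q: "q \<in> ends P" and s: "snd p = snd q"
  obtain f g where pf: "p = (f,g)" by (cases p)
  obtain f' g' where qf: "q = (f',g')" by (cases q)
  have gg: "g = g'" using s pf qf by simp
  show "p = q"
  proof (cases "p \<in> lo P")
    case True
    then have g: "g = pred f" and fm: "f \<in> P" "\<forall>h\<in>P. key h = key f \<longrightarrow> pos f \<le> pos h" unfolding pf lo_def by auto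
    show ?thesis
    proof (cases "q \<in> lo P")
      case True
      then have "g' = pred f'" unfolding qf lo_def by auto
      then show ?thesis using g gg pf qf by (metis succ_pred)
    next
      case False
      then have "q \<in> hi P" using q unfolding ends_def by auto
      then have "g' = succ f'" "f' \<in> P" unfolding qf hi_def by auto
      then have e: "succ f' = pred f" using g gg by simp
      have "key (succ f') = key (pred f)" "pos (succ f') = pos (pred f)" using e by simp_all
      then have "key f' = key f" "pos f' = pos f - 2" by simp_all
      then show ?thesis using fm \<open>f' \<in> P\<close> by force
    qed
  next
    case False
    then have p2: "p \<in> hi P" using p unfolding ends_def by auto
    then have g: "g = succ f" and fm: "f \<in> P" "\<forall>h\<in>P. key h = key f \<longrightarrow> pos h \<le> pos f" unfolding pf hi_def by auto
    show ?thesis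
    proof (cases "q \<in> hi P")
      case True
      then have "g' = succ f'" unfolding qf hi_def by auto
      then show ?thesis using g gg pf qf by (metis pred_succ)
    next
      case False
      then have "q \<in> lo P" using q unfolding ends_def by auto
      then have "g' = pred f'" "f' \<in> P" unfolding qf lo_def by auto
      then have e: "pred f' = succ f" using g gg by simp
      have "key (pred f') = key (succ f)" "pos (pred f') = pos (succ f)" using e by simp_all
      then have "key f' = key f" "pos f' = pos f + 2" by simp_all
      then show ?thesis using fm \<open>f' \<in> P\<close> by force
    qed
  qed
qed

lemma card_snd_ends: "finite P \<Longrightarrow> card (snd ` ends P) = 2 * card (key ` P)"
  using card_image[OF inj_snd_ends] card_ends by simp

lemma snd_ends_SP: "snd ` ends P \<subseteq> SP P"
  using ends_BP unfolding BP_def SP_def by force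

lemma snd_ends_xor: "g \<in> snd ` ends P \<Longrightarrow> (pred g \<in> P) \<noteq> (succ g \<in> P)"
proof -
  assume "g \<in> snd ` ends P"
  then obtain p where "p \<in> ends P" "g = snd p" by blast
  then obtain f where "(f,g) \<in> lo P \<or> (f,g) \<in> hi P" unfolding ends_def by (metis UnE prod.collapse)
  then show ?thesis
  proof
    assume "(f,g) \<in> lo P"
    then have g: "g = pred f" "f \<in> P" "\<forall>h\<in>P. key h = key f \<longrightarrow> pos f \<le> pos h" unfolding lo_def by auto
    then have "pred g \<notin> P" by force
    moreover have "succ g \<in> P" using g by simp
    ultimately show ?thesis by blast
  next
    assume "(f,g) \<in> hi P"
    then have g: "g = succ f" "f \<in> P" "\<forall>h\<in>P. key h = key f \<longrightarrow> pos h \<le> pos f" unfolding hi_def by auto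
    then have "succ g \<notin> P" by force
    moreover have "pred g \<in> P" using g by simp
    ultimately show ?thesis by blast
  qed
qed

definition sconvex :: "face set \<Rightarrow> bool" where
  "sconvex R \<longleftrightarrow> (\<forall>f h g. f \<in> R \<longrightarrow> h \<in> R \<longrightarrow> key g = key f \<longrightarrow> key h = key f \<longrightarrow>
       min (pos h) (pos f) \<le> pos g \<longrightarrow> pos g \<le> max (pos h) (pos f) \<longrightarrow> g \<in> R)"

lemma convex_ends:
  assumes "sconvex R" "f \<in> R" "g \<notin> R" "g = pred f \<or> g = succ f"
  shows "(f,g) \<in> ends R"
  using assms(4)
proof
  assume g: "g = pred f"
  have "\<forall>h\<in>R. key h = key f \<longrightarrow> pos f \<le> pos h"
  proof (intro ballI impI, rule ccontr)
    fix h assume "h \<in> R" "key h = key f" "\<not> pos f \<le> pos h"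
    moreover have "min (pos h) (pos f) \<le> pos g" "pos g \<le> max (pos h) (pos f)" "key g = key f"
      using \<open>\<not> pos f \<le> pos h\<close> g by auto
    ultimately have "g \<in> R" using assms(1,2) unfolding sconvex_def by blast
    then show False using assms(3) by blast
  qed
  then show ?thesis using g assms(2) unfolding ends_def lo_def by blast
next
  assume g: "g = succ f"
  have "\<forall>h\<in>R. key h = key f \<longrightarrow> pos h \<le> pos f"
  proof (intro ballI impI, rule ccontr)
    fix h assume "h \<in> R" "key h = key f" "\<not> pos h \<le> pos f"
    moreover have "min (pos h) (pos f) \<le> pos g" "pos g \<le> max (pos h) (pos f)" "key g = key f"
      using \<open>\<not> pos h \<le> pos f\<close> g by auto
    ultimately have "g \<in> R" using assms(1,2) unfolding sconvex_def by blast
    then show False using assms(3) by blast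
  qed
  then show ?thesis using g assms(2) unfolding ends_def hi_def by blast
qed

end


fun succx :: "face \<Rightarrow> face" where "succx ((x,y),u) = (if u then ((x,y),False) else ((x,y+1),True))"
fun predx :: "face \<Rightarrow> face" where "predx ((x,y),u) = (if u then ((x,y-1),False) else ((x,y),True))"
fun succy :: "face \<Rightarrow> face" where "succy ((x,y),u) = (if u then ((x,y),False) else ((x+1,y),True))"
fun predy :: "face \<Rightarrow> face" where "predy ((x,y),u) = (if u then ((x-1,y),False) else ((x,y),True))"
fun succz :: "face \<Rightarrow> face" where "succz ((x,y),u) = (if u then ((x,y-1),False) else ((x+1,y),True))"
fun predz :: "face \<Rightarrow> face" where "predz ((x,y),u) = (if u then ((x-1,y),False) else ((x,y+1),True))"

definition posx :: "face \<Rightarrow> int" where "posx f = fy f + fz f"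
definition posy :: "face \<Rightarrow> int" where "posy f = fx f + fz f"
definition posz :: "face \<Rightarrow> int" where "posz f = fx f - fy f"

interpretation sx: strip fx posx succx predx
proof
  fix f g :: face
  obtain x y u where f: "f = ((x,y),u)" using face_ex[of f] by blast
  obtain x' y' u' where g: "g = ((x',y'),u')" using face_ex[of g] by blast
  show "fx (succx f) = fx f" "posx (succx f) = posx f + 1" "predx (succx f) = f" "succx (predx f) = f"
    unfolding f posx_def by (cases u; simp)+
  show "adjacent f (succx f)" unfolding f by (cases u; simp add: adj_cases)
  show "fx f = fx g \<Longrightarrow> posx f = posx g \<Longrightarrow> f = g" unfolding f g posx_def
    by (cases u; cases u'; auto; presburger)
qed

interpretation sy: strip fy posy succy predy
proof
  fix f g :: face
  obtain x y u where f: "f = ((x,y),u)" using face_ex[of f] by blast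
  obtain x' y' u' where g: "g = ((x',y'),u')" using face_ex[of g] by blast
  show "fy (succy f) = fy f" "posy (succy f) = posy f + 1" "predy (succy f) = f" "succy (predy f) = f"
    unfolding f posy_def by (cases u; simp)+
  show "adjacent f (succy f)" unfolding f by (cases u; simp add: adj_cases)
  show "fy f = fy g \<Longrightarrow> posy f = posy g \<Longrightarrow> f = g" unfolding f g posy_def
    by (cases u; cases u'; auto; presburger)
qed

interpretation sz: strip fz posz succz predz
proof
  fix f g :: face
  obtain x y u where f: "f = ((x,y),u)" using face_ex[of f] by blast
  obtain x' y' u' where g: "g = ((x',y'),u')" using face_ex[of g] by blast
  show "fz (succz f) = fz f" "posz (succz f) = posz f + 1" "predz (succz f) = f" "succz (predz f) = f"
    unfolding f posz_def by (cases u; simp)+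
  show "adjacent f (succz f)" unfolding f by (cases u; simp add: adj_cases)
  show "fz f = fz g \<Longrightarrow> posz f = posz g \<Longrightarrow> f = g" unfolding f g posz_def
    by (cases u; cases u'; auto; presburger)
qed

lemma count_le2:
  assumes "finite U" "A \<subseteq> U" "B \<subseteq> U" "C \<subseteq> U" "A \<inter> B \<inter> C = {}"
  shows "card A + card B + card C \<le> 2 * card U"
proof -
  have fA: "finite A" "finite B" "finite C" using assms finite_subset by blast+
  have "card A + card B = card (A \<union> B) + card (A \<inter> B)" using card_Un_Int fA by blast
  moreover have "card (A \<inter> B) + card C = card ((A \<inter> B) \<union> C) + card ((A \<inter> B) \<inter> C)"
    using card_Un_Int fA by blast
  moreover have "card (A \<union> B) \<le> card U" using assms by (intro card_mono) auto
  moreover have "card ((A \<inter> B) \<union> C) \<le> card U" using assms by (intro card_mono) auto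
  ultimately show ?thesis using assms(5) by simp
qed

lemma count_ge2:
  assumes "finite U" "A \<subseteq> U" "B \<subseteq> U" "C \<subseteq> U"
    and "\<And>u. u \<in> U \<Longrightarrow> (u \<in> A \<and> u \<in> B) \<or> (u \<in> A \<and> u \<in> C) \<or> (u \<in> B \<and> u \<in> C)"
  shows "2 * card U \<le> card A + card B + card C"
proof -
  have fA: "finite A" "finite B" "finite C" using assms finite_subset by blast+
  have "card A + card B = card (A \<union> B) + card (A \<inter> B)" using card_Un_Int fA by blast
  moreover have "card (A \<inter> B) + card C = card ((A \<inter> B) \<union> C) + card ((A \<inter> B) \<inter> C)"
    using card_Un_Int fA by blast
  moreover have "U \<subseteq> A \<union> B" using assms(5) by blast
  then have "card U \<le> card (A \<union> B)" using fA by (intro card_mono) auto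
  moreover have "U \<subseteq> (A \<inter> B) \<union> C" using assms(5) by blast
  then have "card U \<le> card ((A \<inter> B) \<union> C)" using fA by (intro card_mono) auto
  ultimately show ?thesis by simp
qed

definition HH :: "face set \<Rightarrow> nat" where
  "HH P = card (fx ` P) + card (fy ` P) + card (fz ` P)"

lemma lower_edge: "finite P \<Longrightarrow> HH P \<le> card (BP P)"
proof -
  assume fin: "finite P"
  have "sx.ends P \<inter> sy.ends P \<inter> sz.ends P = {}"
  proof (rule ccontr)
    assume "sx.ends P \<inter> sy.ends P \<inter> sz.ends P \<noteq> {}"
    then obtain f g where fg: "(f,g) \<in> sx.ends P" "(f,g) \<in> sy.ends P" "(f,g) \<in> sz.ends P" by auto
    then have "g = f" using sx.ends_key sy.ends_key sz.ends_key face_eqI by metis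
    moreover have "(f,g) \<in> BP P" using fg(1) sx.ends_BP by blast
    ultimately show False unfolding BP_def by auto
  qed
  from count_le2[OF finite_BP[OF fin] sx.ends_BP sy.ends_BP sz.ends_BP this]
  show ?thesis unfolding HH_def using sx.card_ends[OF fin] sy.card_ends[OF fin] sz.card_ends[OF fin] by simp
qed

lemma xor3:
  assumes "(predx g \<in> P) \<noteq> (succx g \<in> P)" "(predy g \<in> P) \<noteq> (succy g \<in> P)" "(predz g \<in> P) \<noteq> (succz g \<in> P)"
  shows False
proof -
  obtain x y u where g: "g = ((x,y),u)" using face_ex[of g] by blast
  show False using assms unfolding g by (cases u) auto
qed

lemma lower_site: "finite P \<Longrightarrow> HH P \<le> card (SP P)"
proof -
  assume fin: "finite P"
  have "snd ` sx.ends P \<inter> snd ` sy.ends P \<inter> snd ` sz.ends P = {}"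
    using sx.snd_ends_xor sy.snd_ends_xor sz.snd_ends_xor xor3 by blast
  from count_le2[OF finite_SP[OF fin] sx.snd_ends_SP sy.snd_ends_SP sz.snd_ends_SP this]
  show ?thesis unfolding HH_def using sx.card_snd_ends[OF fin] sy.card_snd_ends[OF fin] sz.card_snd_ends[OF fin] by simp
qed


context strip begin
lemma near_pred_succ: "key g = key f \<Longrightarrow> \<bar>pos g - pos f\<bar> = 1 \<Longrightarrow> g = pred f \<or> g = succ f"
proof -
  assume a: "key g = key f" "\<bar>pos g - pos f\<bar> = 1"
  then have "pos g = pos (pred f) \<or> pos g = pos (succ f)" by auto
  then show ?thesis using a kp_inj by (metis key_pred key_succ)
qed
end

definition band :: "int \<Rightarrow> int \<Rightarrow> int \<Rightarrow> int \<Rightarrow> int \<Rightarrow> int \<Rightarrow> face set" where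
  "band x0 x1 y0 y1 z0 z1 = {f. x0 \<le> fx f \<and> fx f \<le> x1 \<and> y0 \<le> fy f \<and> fy f \<le> y1 \<and> z0 \<le> fz f \<and> fz f \<le> z1}"

lemma finite_band: "finite (band x0 x1 y0 y1 z0 z1)"
proof -
  have "band x0 x1 y0 y1 z0 z1 \<subseteq> (\<lambda>(x,y,u). ((x,y),u)) ` ({x0..x1} \<times> {y0..y1} \<times> UNIV)"
  proof
    fix f assume "f \<in> band x0 x1 y0 y1 z0 z1"
    moreover obtain x y u where f: "f = ((x,y),u)" using face_ex[of f] by blast
    ultimately show "f \<in> (\<lambda>(x,y,u). ((x,y),u)) ` ({x0..x1} \<times> {y0..y1} \<times> UNIV)"
      unfolding band_def by force
  qed
  then show ?thesis by (rule finite_subset) auto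
qed

lemma mono_x: "fx g = fx h \<Longrightarrow> posx h \<le> posx g \<Longrightarrow> fy h \<le> fy g \<and> fz h \<le> fz g"
proof -
  assume a: "fx g = fx h" "posx h \<le> posx g"
  obtain x y u where g: "g = ((x,y),u)" using face_ex[of g] by blast
  obtain x' y' u' where h: "h = ((x',y'),u')" using face_ex[of h] by blast
  show ?thesis using a unfolding g h posx_def by (cases u; cases u'; simp; presburger)
qed

lemma mono_y: "fy g = fy h \<Longrightarrow> posy h \<le> posy g \<Longrightarrow> fx h \<le> fx g \<and> fz h \<le> fz g"
proof -
  assume a: "fy g = fy h" "posy h \<le> posy g"
  obtain x y u where g: "g = ((x,y),u)" using face_ex[of g] by blast
  obtain x' y' u' where h: "h = ((x',y'),u')" using face_ex[of h] by blast
  show ?thesis using a unfolding g h posy_def by (cases u; cases u'; simp; presburger)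
qed

lemma mono_z: "fz g = fz h \<Longrightarrow> posz h \<le> posz g \<Longrightarrow> fx h \<le> fx g \<and> fy g \<le> fy h"
proof -
  assume a: "fz g = fz h" "posz h \<le> posz g"
  obtain x y u where g: "g = ((x,y),u)" using face_ex[of g] by blast
  obtain x' y' u' where h: "h = ((x',y'),u')" using face_ex[of h] by blast
  show ?thesis using a unfolding g h posz_def by (cases u; cases u'; simp; presburger)
qed

lemma band_convex_x: "sx.sconvex (band x0 x1 y0 y1 z0 z1)"
  unfolding sx.sconvex_def
proof (intro allI impI)
  fix f h g assume a: "f \<in> band x0 x1 y0 y1 z0 z1" "h \<in> band x0 x1 y0 y1 z0 z1" "fx g = fx f" "fx h = fx f"
    "min (posx h) (posx f) \<le> posx g" "posx g \<le> max (posx h) (posx f)"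
  show "g \<in> band x0 x1 y0 y1 z0 z1"
  proof (cases "posx h \<le> posx f")
    case True
    then have "posx h \<le> posx g" "posx g \<le> posx f" using a by auto
    with mono_x[of g h] mono_x[of f g] a show ?thesis unfolding band_def by auto
  next
    case False
    then have "posx f \<le> posx g" "posx g \<le> posx h" using a by auto
    with mono_x[of g f] mono_x[of h g] a show ?thesis unfolding band_def by auto
  qed
qed

lemma band_convex_y: "sy.sconvex (band x0 x1 y0 y1 z0 z1)"
  unfolding sy.sconvex_def
proof (intro allI impI)
  fix f h g assume a: "f \<in> band x0 x1 y0 y1 z0 z1" "h \<in> band x0 x1 y0 y1 z0 z1" "fy g = fy f" "fy h = fy f"
    "min (posy h) (posy f) \<le> posy g" "posy g \<le> max (posy h) (posy f)"
  show "g \<in> band x0 x1 y0 y1 z0 z1"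
  proof (cases "posy h \<le> posy f")
    case True
    then have "posy h \<le> posy g" "posy g \<le> posy f" using a by auto
    with mono_y[of g h] mono_y[of f g] a show ?thesis unfolding band_def by auto
  next
    case False
    then have "posy f \<le> posy g" "posy g \<le> posy h" using a by auto
    with mono_y[of g f] mono_y[of h g] a show ?thesis unfolding band_def by auto
  qed
qed

lemma band_convex_z: "sz.sconvex (band x0 x1 y0 y1 z0 z1)"
  unfolding sz.sconvex_def
proof (intro allI impI)
  fix f h g assume a: "f \<in> band x0 x1 y0 y1 z0 z1" "h \<in> band x0 x1 y0 y1 z0 z1" "fz g = fz f" "fz h = fz f"
    "min (posz h) (posz f) \<le> posz g" "posz g \<le> max (posz h) (posz f)"
  show "g \<in> band x0 x1 y0 y1 z0 z1"
  proof (cases "posz h \<le> posz f")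
    case True
    then have "posz h \<le> posz g" "posz g \<le> posz f" using a by auto
    with mono_z[of g h] mono_z[of f g] a show ?thesis unfolding band_def by auto
  next
    case False
    then have "posz f \<le> posz g" "posz g \<le> posz h" using a by auto
    with mono_z[of g f] mono_z[of h g] a show ?thesis unfolding band_def by auto
  qed
qed

lemma nbr_cases:
  assumes "adjacent f g"
  shows "(fx g = fx f \<and> \<bar>posx g - posx f\<bar> = 1 \<and> fy g = fy f \<and> \<bar>posy g - posy f\<bar> = 1) \<or>
         (fx g = fx f \<and> \<bar>posx g - posx f\<bar> = 1 \<and> fz g = fz f \<and> \<bar>posz g - posz f\<bar> = 1) \<or>
         (fy g = fy f \<and> \<bar>posy g - posy f\<bar> = 1 \<and> fz g = fz f \<and> \<bar>posz g - posz f\<bar> = 1)"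
  using assms unfolding adjacent_nbr nbr_def posx_def posy_def posz_def by auto

lemma upper_edge: "card (BP (band x0 x1 y0 y1 z0 z1)) \<le> HH (band x0 x1 y0 y1 z0 z1)"
proof -
  let ?R = "band x0 x1 y0 y1 z0 z1"
  have fin: "finite ?R" by (rule finite_band)
  have "2 * card (BP ?R) \<le> card (sx.ends ?R) + card (sy.ends ?R) + card (sz.ends ?R)"
  proof (rule count_ge2[OF finite_BP[OF fin] sx.ends_BP sy.ends_BP sz.ends_BP])
    fix p assume "p \<in> BP ?R"
    then obtain f g where p: "p = (f,g)" "f \<in> ?R" "g \<notin> ?R" "adjacent f g" unfolding BP_def by auto
    have X: "fx g = fx f \<Longrightarrow> \<bar>posx g - posx f\<bar> = 1 \<Longrightarrow> (f,g) \<in> sx.ends ?R"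
      using sx.convex_ends[OF band_convex_x p(2,3)] sx.near_pred_succ[of g f] by blast
    have Y: "fy g = fy f \<Longrightarrow> \<bar>posy g - posy f\<bar> = 1 \<Longrightarrow> (f,g) \<in> sy.ends ?R"
      using sy.convex_ends[OF band_convex_y p(2,3)] sy.near_pred_succ[of g f] by blast
    have Z: "fz g = fz f \<Longrightarrow> \<bar>posz g - posz f\<bar> = 1 \<Longrightarrow> (f,g) \<in> sz.ends ?R"
      using sz.convex_ends[OF band_convex_z p(2,3)] sz.near_pred_succ[of g f] by blast
    show "(p \<in> sx.ends ?R \<and> p \<in> sy.ends ?R) \<or> (p \<in> sx.ends ?R \<and> p \<in> sz.ends ?R) \<or> (p \<in> sy.ends ?R \<and> p \<in> sz.ends ?R)"
      using nbr_cases[OF p(4)]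
    proof (elim disjE conjE)
      assume "fx g = fx f" "\<bar>posx g - posx f\<bar> = 1" "fy g = fy f" "\<bar>posy g - posy f\<bar> = 1"
      then show ?thesis using X Y unfolding p(1) by simp
    next
      assume "fx g = fx f" "\<bar>posx g - posx f\<bar> = 1" "fz g = fz f" "\<bar>posz g - posz f\<bar> = 1"
      then show ?thesis using X Z unfolding p(1) by simp
    next
      assume "fy g = fy f" "\<bar>posy g - posy f\<bar> = 1" "fz g = fz f" "\<bar>posz g - posz f\<bar> = 1"
      then show ?thesis using Y Z unfolding p(1) by simp
    qed
  qed
  then show ?thesis unfolding HH_def using sx.card_ends[OF fin] sy.card_ends[OF fin] sz.card_ends[OF fin] by simp
qed

lemma upper_site: "card (SP (band x0 x1 y0 y1 z0 z1)) \<le> HH (band x0 x1 y0 y1 z0 z1)"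
proof -
  let ?R = "band x0 x1 y0 y1 z0 z1"
  have fin: "finite ?R" by (rule finite_band)
  have "2 * card (SP ?R) \<le> card (snd ` sx.ends ?R) + card (snd ` sy.ends ?R) + card (snd ` sz.ends ?R)"
  proof (rule count_ge2[OF finite_SP[OF fin] sx.snd_ends_SP sy.snd_ends_SP sz.snd_ends_SP])
    fix g assume "g \<in> SP ?R"
    then obtain f where p: "f \<in> ?R" "g \<notin> ?R" "adjacent f g" unfolding SP_def by auto
    have X: "fx g = fx f \<Longrightarrow> \<bar>posx g - posx f\<bar> = 1 \<Longrightarrow> g \<in> snd ` sx.ends ?R"
    proof -
      assume "fx g = fx f" "\<bar>posx g - posx f\<bar> = 1"
      then have "(f,g) \<in> sx.ends ?R" using sx.convex_ends[OF band_convex_x p(1,2)] sx.near_pred_succ[of g f] by blast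
      then show ?thesis by force
    qed
    have Y: "fy g = fy f \<Longrightarrow> \<bar>posy g - posy f\<bar> = 1 \<Longrightarrow> g \<in> snd ` sy.ends ?R"
    proof -
      assume "fy g = fy f" "\<bar>posy g - posy f\<bar> = 1"
      then have "(f,g) \<in> sy.ends ?R" using sy.convex_ends[OF band_convex_y p(1,2)] sy.near_pred_succ[of g f] by blast
      then show ?thesis by force
    qed
    have Z: "fz g = fz f \<Longrightarrow> \<bar>posz g - posz f\<bar> = 1 \<Longrightarrow> g \<in> snd ` sz.ends ?R"
    proof -
      assume "fz g = fz f" "\<bar>posz g - posz f\<bar> = 1"
      then have "(f,g) \<in> sz.ends ?R" using sz.convex_ends[OF band_convex_z p(1,2)] sz.near_pred_succ[of g f] by blast
      then show ?thesis by force
    qed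
    show "(g \<in> snd ` sx.ends ?R \<and> g \<in> snd ` sy.ends ?R) \<or> (g \<in> snd ` sx.ends ?R \<and> g \<in> snd ` sz.ends ?R) \<or> (g \<in> snd ` sy.ends ?R \<and> g \<in> snd ` sz.ends ?R)"
      using nbr_cases[OF p(3)]
    proof (elim disjE conjE)
      assume "fx g = fx f" "\<bar>posx g - posx f\<bar> = 1" "fy g = fy f" "\<bar>posy g - posy f\<bar> = 1"
      then show ?thesis using X Y by simp
    next
      assume "fx g = fx f" "\<bar>posx g - posx f\<bar> = 1" "fz g = fz f" "\<bar>posz g - posz f\<bar> = 1"
      then show ?thesis using X Z by simp
    next
      assume "fy g = fy f" "\<bar>posy g - posy f\<bar> = 1" "fz g = fz f" "\<bar>posz g - posz f\<bar> = 1"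
      then show ?thesis using Y Z by simp
    qed
  qed
  then show ?thesis unfolding HH_def using sx.card_snd_ends[OF fin] sy.card_snd_ends[OF fin] sz.card_snd_ends[OF fin] by simp
qed


lemma adj_coord_le1:
  assumes "adjacent f g"
  shows "\<bar>fx f - fx g\<bar> \<le> 1" "\<bar>fy f - fy g\<bar> \<le> 1" "\<bar>fz f - fz g\<bar> \<le> 1"
  using assms unfolding adjacent_nbr nbr_def by auto

lemma conn_interval_aux:
  assumes "(f,g) \<in> {(a, b). a \<in> P \<and> b \<in> P \<and> adjacent a b}\<^sup>*" "f \<in> P"
    and k: "\<And>a b. adjacent a b \<Longrightarrow> \<bar>k a - k b\<bar> \<le> (1::int)"
  shows "k f \<le> c \<Longrightarrow> c \<le> k g \<Longrightarrow> c \<in> k ` P"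
  using assms(1)
proof (induction arbitrary: c rule: rtrancl_induct)
  case base
  then show ?case using assms(2) by force
next
  case (step y z)
  show ?case
  proof (cases "c \<le> k y")
    case True
    then show ?thesis using step by blast
  next
    case False
    from step(2) have "z \<in> P" "adjacent y z" by auto
    with k[of y z] False step(5) have "c = k z" by auto
    then show ?thesis using \<open>z \<in> P\<close> by blast
  qed
qed

lemma conn_interval:
  assumes "polyiamond P"
    and k: "\<And>a b. adjacent a b \<Longrightarrow> \<bar>k a - k b\<bar> \<le> (1::int)"
  shows "k ` P = {Min (k ` P)..Max (k ` P)}"
proof -
  have fin: "finite (k ` P)" and ne: "k ` P \<noteq> {}" using assms(1) unfolding polyiamond_def by auto
  obtain f where f: "f \<in> P" "k f = Min (k ` P)" using Min_in[OF fin ne] by auto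
  obtain g where g: "g \<in> P" "k g = Max (k ` P)" using Max_in[OF fin ne] by auto
  have "(f,g) \<in> {(a, b). a \<in> P \<and> b \<in> P \<and> adjacent a b}\<^sup>*"
    using assms(1) f g unfolding polyiamond_def face_connected_def by blast
  from conn_interval_aux[OF this f(1) k] f g have "{Min (k ` P)..Max (k ` P)} \<subseteq> k ` P" by auto
  moreover have "k ` P \<subseteq> {Min (k ` P)..Max (k ` P)}" using fin by auto
  ultimately show ?thesis by blast
qed

lemma conn_card:
  assumes "polyiamond P"
    and k: "\<And>a b. adjacent a b \<Longrightarrow> \<bar>k a - k b\<bar> \<le> (1::int)"
  shows "int (card (k ` P)) = Max (k ` P) - Min (k ` P) + 1"
proof -
  have fin: "finite (k ` P)" and ne: "k ` P \<noteq> {}" using assms(1) unfolding polyiamond_def by auto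
  have "Min (k ` P) \<le> Max (k ` P)" using fin ne by simp
  moreover have "k ` P = {Min (k ` P)..Max (k ` P)}" by (rule conn_interval[OF assms])
  then have "card (k ` P) = nat (Max (k ` P) - Min (k ` P) + 1)" by (metis card_atLeastAtMost_int)
  ultimately show ?thesis by simp
qed

fun transf :: "int \<times> int \<Rightarrow> face \<Rightarrow> face" where
  "transf (s,t) ((x,y),u) = ((x+s,y+t),u)"

lemma transf_coords[simp]:
  "fx (transf (s,t) f) = fx f + s" "fy (transf (s,t) f) = fy f + t" "fz (transf (s,t) f) = fz f + s + t"
  by (cases f; auto)+

lemma transf_inv[simp]: "transf (-s,-t) (transf (s,t) f) = f" "transf (s,t) (transf (-s,-t) f) = f"
  by (cases f; auto)+

lemma inj_transf: "inj (transf st)"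
  by (metis injI transf_inv(1) surj_pair)

definition Tri :: "int \<Rightarrow> face set" where
  "Tri n = {f. 0 \<le> fx f \<and> 0 \<le> fy f \<and> fz f \<le> n - 1}"

definition Layer :: "int \<Rightarrow> face set" where
  "Layer m = {f. 0 \<le> fx f \<and> 0 \<le> fy f \<and> fz f = m}"

lemma card_Layer: "m \<ge> 0 \<Longrightarrow> card (Layer m) = nat (2*m+1)"
proof -
  assume m: "m \<ge> 0"
  let ?U = "(\<lambda>x. ((x, m-x),True)) ` {0..m}"
  let ?D = "(\<lambda>x. ((x, m-1-x),False)) ` {0..m-1}"
  have "Layer m = ?U \<union> ?D"
  proof
    show "Layer m \<subseteq> ?U \<union> ?D"
    proof
      fix f assume "f \<in> Layer m"
      moreover obtain x y u where f: "f = ((x,y),u)" using face_ex[of f] by blast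
      ultimately show "f \<in> ?U \<union> ?D" unfolding Layer_def by (cases u) (auto simp: image_iff)
    qed
    show "?U \<union> ?D \<subseteq> Layer m" unfolding Layer_def by auto
  qed
  moreover have "?U \<inter> ?D = {}" by auto
  moreover have "card ?U = nat (m+1)" by (subst card_image) (auto simp: inj_on_def)
  moreover have "card ?D = nat m" by (subst card_image) (auto simp: inj_on_def)
  ultimately show ?thesis using m by (simp add: card_Un_disjoint)
qed

lemma Tri_finite: "finite (Tri n)"
proof -
  have "Tri n \<subseteq> band 0 n 0 n (-1) n"
  proof
    fix f assume "f \<in> Tri n" then show "f \<in> band 0 n 0 n (-1) n"
      using fz_range[of f] unfolding Tri_def band_def by auto
  qed
  then show ?thesis using finite_band finite_subset by blast
qed

lemma card_Tri_nat: "card (Tri (int m)) = m * m"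
proof (induction m)
  case 0
  have "Tri 0 = {}"
  proof -
    { fix f assume "f \<in> Tri 0" then have False using fz_range[of f] unfolding Tri_def by auto }
    then show ?thesis by blast
  qed
  then show ?case by simp
next
  case (Suc m)
  have "Tri (int (Suc m)) = Tri (int m) \<union> Layer (int m)" unfolding Tri_def Layer_def by auto
  moreover have "Tri (int m) \<inter> Layer (int m) = {}" unfolding Tri_def Layer_def by auto
  ultimately have "card (Tri (int (Suc m))) = card (Tri (int m)) + card (Layer (int m))"
    using card_Un_disjoint Tri_finite Layer_def
    by (metis (no_types, lifting) Tri_finite finite_Un)
  also have "\<dots> = m*m + (2*m+1)" using Suc card_Layer[of "int m"] by (simp add: nat_add_distrib nat_mult_distrib)
  finally show ?case by simp
qed

lemma card_Tri: "n \<ge> 0 \<Longrightarrow> int (card (Tri n)) = n * n"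
  using card_Tri_nat[of "nat n"] by simp

definition Tb :: "int \<Rightarrow> int \<Rightarrow> int \<Rightarrow> int \<Rightarrow> face set" where
  "Tb d a b c = band 0 (d-b-1) 0 (d-c-1) a (d-1)"

lemma card_Tb:
  assumes "0 \<le> a" "0 \<le> b" "0 \<le> c" "a + b \<le> d" "b + c \<le> d" "a + c \<le> d"
  shows "int (card (Tb d a b c)) = d*d - a*a - b*b - c*c"
proof -
  let ?Ca = "{f\<in>Tri d. fz f < a}"
  let ?Cb = "{f\<in>Tri d. d - b \<le> fx f}"
  let ?Cc = "{f\<in>Tri d. d - c \<le> fy f}"
  have Ca: "?Ca = Tri a" unfolding Tri_def using assms by auto
  have Cb: "?Cb = transf (d-b,0) ` Tri b"
  proof
    show "?Cb \<subseteq> transf (d-b,0) ` Tri b"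
    proof
      fix f assume f: "f \<in> ?Cb"
      have "transf (-(d-b),-0) f \<in> Tri b" using f unfolding Tri_def by auto
      moreover have "f = transf (d-b,0) (transf (-(d-b),-0) f)" by (metis transf_inv(2))
      ultimately show "f \<in> transf (d-b,0) ` Tri b" by blast
    qed
    show "transf (d-b,0) ` Tri b \<subseteq> ?Cb" unfolding Tri_def using assms by auto
  qed
  have Cc: "?Cc = transf (0,d-c) ` Tri c"
  proof
    show "?Cc \<subseteq> transf (0,d-c) ` Tri c"
    proof
      fix f assume f: "f \<in> ?Cc"
      have "transf (-0,-(d-c)) f \<in> Tri c" using f unfolding Tri_def by auto
      moreover have "f = transf (0,d-c) (transf (-0,-(d-c)) f)" by (metis transf_inv(2))
      ultimately show "f \<in> transf (0,d-c) ` Tri c" by blast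
    qed
    show "transf (0,d-c) ` Tri c \<subseteq> ?Cc" unfolding Tri_def using assms by auto
  qed
  have cCa: "int (card ?Ca) = a*a" using Ca card_Tri assms by simp
  have cCb: "int (card ?Cb) = b*b" using Cb card_image[OF inj_on_subset[OF inj_transf]] card_Tri assms by simp
  have cCc: "int (card ?Cc) = c*c" using Cc card_image[OF inj_on_subset[OF inj_transf]] card_Tri assms by simp
  have d0: "d \<ge> 0" using assms by simp
  have eq: "Tb d a b c = Tri d - (?Ca \<union> ?Cb \<union> ?Cc)" unfolding Tb_def band_def Tri_def by auto
  have disj1: "?Ca \<inter> ?Cb = {}"
  proof -
    { fix f assume "f \<in> ?Ca" "f \<in> ?Cb" then have False using fz_range[of f] assms unfolding Tri_def by auto }
    then show ?thesis by blast
  qed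
  have disj2: "(?Ca \<union> ?Cb) \<inter> ?Cc = {}"
  proof -
    { fix f assume "f \<in> ?Ca \<union> ?Cb" "f \<in> ?Cc" then have False using fz_range[of f] assms unfolding Tri_def by auto }
    then show ?thesis by blast
  qed
  have fins: "finite ?Ca" "finite ?Cb" "finite ?Cc" using Tri_finite by auto
  have "card (?Ca \<union> ?Cb \<union> ?Cc) = card ?Ca + card ?Cb + card ?Cc"
    using card_Un_disjoint[OF _ _ disj1] card_Un_disjoint[OF _ _ disj2] fins by simp
  moreover have "card (Tb d a b c) = card (Tri d) - card (?Ca \<union> ?Cb \<union> ?Cc)"
    unfolding eq by (rule card_Diff_subset) (use fins in auto)
  moreover have "card (?Ca \<union> ?Cb \<union> ?Cc) \<le> card (Tri d)" by (rule card_mono) (auto simp: Tri_finite)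
  ultimately show ?thesis using cCa cCb cCc card_Tri[OF d0] by simp
qed

lemma T_hex_Tb: "T_hex d a b c = Tb (int d) (int a) (int b) (int c)"
proof -
  { fix f :: face
    obtain x y u where f: "f = ((x,y),u)" using face_ex[of f] by blast
    have "f \<in> T_hex d a b c \<longleftrightarrow> f \<in> Tb (int d) (int a) (int b) (int c)"
      unfolding f T_hex_def Tb_def band_def in_hex_region_def by (cases u) (auto simp: Let_def) }
  then show ?thesis by blast
qed

lemma band_transf: "band x0 x1 y0 y1 z0 z1 = transf (x0,y0) ` band 0 (x1-x0) 0 (y1-y0) (z0-x0-y0) (z1-x0-y0)"
proof
  show "band x0 x1 y0 y1 z0 z1 \<subseteq> transf (x0,y0) ` band 0 (x1-x0) 0 (y1-y0) (z0-x0-y0) (z1-x0-y0)"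
  proof
    fix f assume f: "f \<in> band x0 x1 y0 y1 z0 z1"
    have "transf (-x0,-y0) f \<in> band 0 (x1-x0) 0 (y1-y0) (z0-x0-y0) (z1-x0-y0)" using f unfolding band_def by auto
    moreover have "f = transf (x0,y0) (transf (-x0,-y0) f)" by simp
    ultimately show "f \<in> transf (x0,y0) ` band 0 (x1-x0) 0 (y1-y0) (z0-x0-y0) (z1-x0-y0)" by blast
  qed
  show "transf (x0,y0) ` band 0 (x1-x0) 0 (y1-y0) (z0-x0-y0) (z1-x0-y0) \<subseteq> band x0 x1 y0 y1 z0 z1"
    unfolding band_def by auto
qed


fun rotf :: "face \<Rightarrow> face" where
  "rotf ((x,y),True) = ((-y-1, x+y), False)"
| "rotf ((x,y),False) = ((-y-1, x+y+1), True)"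

fun rotinv :: "face \<Rightarrow> face" where
  "rotinv ((x,y),True) = ((x+y, -x-1), False)"
| "rotinv ((x,y),False) = ((x+y+1, -x-1), True)"

fun reflf :: "face \<Rightarrow> face" where
  "reflf ((x,y),u) = ((y,x),u)"

lemma rotf_rotinv[simp]: "rotf (rotinv f) = f" "rotinv (rotf f) = f"
proof -
  obtain x y u where f: "f = ((x,y),u)" using face_ex[of f] by blast
  show "rotf (rotinv f) = f" "rotinv (rotf f) = f" unfolding f by (cases u; simp)+
qed

lemma reflf_reflf[simp]: "reflf (reflf f) = f"
  by (metis reflf.simps face_ex)

lemma bij_rotf: "bij rotf"
  by (metis bij_betw_imageI inj_on_inverseI rotf_rotinv surj_def)
lemma bij_reflf: "bij reflf"
  by (metis bij_betw_imageI inj_on_inverseI reflf_reflf surj_def)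
lemma bij_transf: "bij (transf t)"
proof -
  obtain s r where t: "t = (s,r)" by (cases t)
  show ?thesis unfolding t by (metis bij_betw_imageI inj_on_inverseI transf_inv surj_def)
qed

lemma rotf_coords[simp]: "fx (rotf f) = - fy f - 1" "fy (rotf f) = fz f" "fz (rotf f) = fx f"
proof -
  obtain x y u where f: "f = ((x,y),u)" using face_ex[of f] by blast
  show "fx (rotf f) = - fy f - 1" "fy (rotf f) = fz f" "fz (rotf f) = fx f" unfolding f by (cases u; simp)+
qed

lemma reflf_coords[simp]: "fx (reflf f) = fy f" "fy (reflf f) = fx f" "fz (reflf f) = fz f"
proof -
  obtain x y u where f: "f = ((x,y),u)" using face_ex[of f] by blast
  show "fx (reflf f) = fy f" "fy (reflf f) = fx f" "fz (reflf f) = fz f" unfolding f by (cases u; simp)+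
qed

lemma verts_rot: "rot60 ` verts f = verts (rotf f)"
proof -
  obtain x y u where f: "f = ((x,y),u)" using face_ex[of f] by blast
  show ?thesis unfolding f by (cases u) (auto simp: rot60_def)
qed

lemma verts_refl: "refl ` verts f = verts (reflf f)"
proof -
  obtain x y u where f: "f = ((x,y),u)" using face_ex[of f] by blast
  show ?thesis unfolding f by (cases u) (auto simp: refl_def)
qed

lemma verts_trans: "(\<lambda>v. vadd v t) ` verts f = verts (transf t f)"
proof -
  obtain x y u where f: "f = ((x,y),u)" using face_ex[of f] by blast
  obtain s r where t: "t = (s,r)" by (cases t)
  show ?thesis unfolding f t by (cases u) (auto simp: vadd_def)
qed

lemma verts_rotk: "(rot60 ^^ k) ` verts f = verts ((rotf ^^ k) f)"
proof (induction k)
  case 0 then show ?case by simp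
next
  case (Suc k)
  have "(rot60 ^^ Suc k) ` verts f = rot60 ` ((rot60 ^^ k) ` verts f)" by (simp add: image_comp)
  also have "\<dots> = verts ((rotf ^^ Suc k) f)" using Suc verts_rot by simp
  finally show ?case .
qed

lemma verts_inj: "verts f = verts g \<Longrightarrow> f = g"
proof -
  assume e: "verts f = verts g"
  obtain x y u where f: "f = ((x,y),u)" using face_ex[of f] by blast
  obtain x' y' u' where g: "g = ((x',y'),u')" using face_ex[of g] by blast
  have "card (verts f \<inter> verts g) = card (verts f)" using e by simp
  have c3: "card (verts f) = 3" unfolding f by (cases u) (auto simp: card_insert_if)
  have adj: "adjacent f (if u then ((x,y),False) else ((x,y),True))" unfolding f by (cases u) (auto simp: adj_cases)
  then have "g = f \<or> g = (if u then ((x,y),False) else ((x,y),True))"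
    using edge_two_faces[OF adj, of g] e by (metis inf_le1)
  moreover have "g \<noteq> (if u then ((x,y),False) else ((x,y),True))"
  proof
    assume "g = (if u then ((x,y),False) else ((x,y),True))"
    then have "adjacent f g" using adj by simp
    then show False using e c3 unfolding adjacent_def by simp
  qed
  ultimately show "f = g" by simp
qed

definition facemap :: "(vertex \<Rightarrow> vertex) \<Rightarrow> (face \<Rightarrow> face) \<Rightarrow> bool" where
  "facemap \<sigma> \<phi> \<longleftrightarrow> inj \<sigma> \<and> bij \<phi> \<and> (\<forall>f. \<sigma> ` verts f = verts (\<phi> f))"

lemma facemap_verts: "facemap \<sigma> \<phi> \<Longrightarrow> \<sigma> ` verts f = verts (\<phi> f)"
  unfolding facemap_def by blast
lemma facemap_injs: "facemap \<sigma> \<phi> \<Longrightarrow> inj \<sigma>"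
  unfolding facemap_def by blast
lemma facemap_bij: "facemap \<sigma> \<phi> \<Longrightarrow> bij \<phi>"
  unfolding facemap_def by blast
lemma facemapI: "inj \<sigma> \<Longrightarrow> bij \<phi> \<Longrightarrow> (\<And>f. \<sigma> ` verts f = verts (\<phi> f)) \<Longrightarrow> facemap \<sigma> \<phi>"
  unfolding facemap_def by blast

lemma inj_rot60: "inj rot60" unfolding rot60_def by (rule injI) auto
lemma inj_refl: "inj refl" unfolding refl_def by (rule injI) auto
lemma inj_vadd: "inj (\<lambda>v. vadd v t)" unfolding vadd_def by (rule injI) auto

lemma facemap_comp: "facemap \<sigma> \<phi> \<Longrightarrow> facemap \<tau> \<psi> \<Longrightarrow> facemap (\<sigma> \<circ> \<tau>) (\<phi> \<circ> \<psi>)"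
proof -
  assume a: "facemap \<sigma> \<phi>" "facemap \<tau> \<psi>"
  have "\<forall>f. (\<sigma> \<circ> \<tau>) ` verts f = verts ((\<phi> \<circ> \<psi>) f)"
  proof
    fix f
    have "(\<sigma> \<circ> \<tau>) ` verts f = \<sigma> ` (\<tau> ` verts f)" by (simp add: image_comp)
    also have "\<dots> = \<sigma> ` verts (\<psi> f)" using facemap_verts[OF a(2)] by simp
    also have "\<dots> = verts (\<phi> (\<psi> f))" using facemap_verts[OF a(1)] by simp
    finally show "(\<sigma> \<circ> \<tau>) ` verts f = verts ((\<phi> \<circ> \<psi>) f)" by simp
  qed
  moreover have "inj (\<sigma> \<circ> \<tau>)" "bij (\<phi> \<circ> \<psi>)" using a unfolding facemap_def by (auto simp: inj_compose bij_comp)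
  ultimately show ?thesis unfolding facemap_def by blast
qed

lemma facemap_rotk: "facemap (rot60 ^^ k) (rotf ^^ k)"
  unfolding facemap_def using verts_rotk bij_rotf inj_rot60 by simp
lemma facemap_refl: "facemap refl reflf"
  unfolding facemap_def using verts_refl bij_reflf inj_refl by simp
lemma facemap_trans: "facemap (\<lambda>v. vadd v t) (transf t)"
  unfolding facemap_def using verts_trans bij_transf inj_vadd by simp

lemma facemap_LS: "\<sigma> \<in> lattice_symmetries \<Longrightarrow> \<exists>\<phi>. facemap \<sigma> \<phi>"
proof -
  assume "\<sigma> \<in> lattice_symmetries"
  then obtain k t where "\<sigma> = (\<lambda>v. vadd ((rot60 ^^ k) v) t) \<or> \<sigma> = (\<lambda>v. vadd ((rot60 ^^ k) (refl v)) t)"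
    unfolding lattice_symmetries_def by blast
  then show ?thesis
  proof
    assume s: "\<sigma> = (\<lambda>v. vadd ((rot60 ^^ k) v) t)"
    have "facemap ((\<lambda>v. vadd v t) \<circ> (rot60 ^^ k)) (transf t \<circ> rotf ^^ k)"
      by (rule facemap_comp[OF facemap_trans facemap_rotk])
    then show ?thesis unfolding s comp_def by blast
  next
    assume s: "\<sigma> = (\<lambda>v. vadd ((rot60 ^^ k) (refl v)) t)"
    have "facemap ((\<lambda>v. vadd v t) \<circ> (rot60 ^^ k) \<circ> refl) (transf t \<circ> rotf ^^ k \<circ> reflf)"
      by (rule facemap_comp[OF facemap_comp[OF facemap_trans facemap_rotk] facemap_refl])
    then show ?thesis unfolding s comp_def by blast
  qed
qed

lemma face_image_facemap: "facemap \<sigma> \<phi> \<Longrightarrow> face_image \<sigma> X = \<phi> ` X"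
proof -
  assume a: "facemap \<sigma> \<phi>"
  then have e: "\<And>f. \<sigma> ` verts f = verts (\<phi> f)" unfolding facemap_def by blast
  have "\<And>g f. verts g = \<sigma> ` verts f \<longleftrightarrow> g = \<phi> f" using e verts_inj by metis
  then show ?thesis unfolding face_image_def by blast
qed

lemma facemap_adj: "facemap \<sigma> \<phi> \<Longrightarrow> adjacent (\<phi> f) (\<phi> g) \<longleftrightarrow> adjacent f g"
proof -
  assume fm: "facemap \<sigma> \<phi>"
  then have "verts (\<phi> f) \<inter> verts (\<phi> g) = \<sigma> ` (verts f \<inter> verts g)"
    using facemap_verts[OF fm, of f] facemap_verts[OF fm, of g] image_Int[OF facemap_injs[OF fm]] by simp
  moreover have "card (\<sigma> ` (verts f \<inter> verts g)) = card (verts f \<inter> verts g)"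
    using card_image[OF inj_on_subset[OF facemap_injs[OF fm] subset_UNIV]] by simp
  ultimately show ?thesis unfolding adjacent_def by simp
qed

lemma facemap_BP: "facemap \<sigma> \<phi> \<Longrightarrow> card (BP (\<phi> ` X)) = card (BP X)"
proof -
  assume fm: "facemap \<sigma> \<phi>"
  then have b: "bij \<phi>" by (rule facemap_bij)
  then have inj: "inj \<phi>" by (rule bij_is_inj)
  have mem: "\<And>f. \<phi> f \<in> \<phi> ` X \<longleftrightarrow> f \<in> X" using inj by (simp add: inj_image_mem_iff)
  have adj: "\<And>f g. adjacent (\<phi> f) (\<phi> g) \<longleftrightarrow> adjacent f g" by (rule facemap_adj[OF fm])
  have "BP (\<phi> ` X) = map_prod \<phi> \<phi> ` BP X"
  proof
    show "BP (\<phi> ` X) \<subseteq> map_prod \<phi> \<phi> ` BP X"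
    proof
      fix p assume p0: "p \<in> BP (\<phi> ` X)"
      obtain f' g' where pp: "p = (f',g')" by (cases p)
      have p: "f' \<in> \<phi> ` X" "g' \<notin> \<phi> ` X" "adjacent f' g'" using p0 unfolding pp BP_def by simp_all
      obtain f where f: "f' = \<phi> f" using b by (metis bij_pointE)
      obtain g where g: "g' = \<phi> g" using b by (metis bij_pointE)
      have "(f,g) \<in> BP X" using p unfolding f g mem adj BP_def by simp
      moreover have "p = map_prod \<phi> \<phi> (f,g)" using pp f g by simp
      ultimately show "p \<in> map_prod \<phi> \<phi> ` BP X" by blast
    qed
    show "map_prod \<phi> \<phi> ` BP X \<subseteq> BP (\<phi> ` X)"
    proof
      fix p assume "p \<in> map_prod \<phi> \<phi> ` BP X"
      then obtain q where q: "q \<in> BP X" "p = map_prod \<phi> \<phi> q" by (rule imageE)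
      obtain f g where fg: "q = (f,g)" by (cases q)
      have h: "f \<in> X" "g \<notin> X" "adjacent f g" using q(1) unfolding fg BP_def by simp_all
      have "\<phi> f \<in> \<phi> ` X" "\<phi> g \<notin> \<phi> ` X" "adjacent (\<phi> f) (\<phi> g)" using h mem adj by simp_all
      then show "p \<in> BP (\<phi> ` X)" unfolding BP_def q(2) fg by simp
    qed
  qed
  moreover have "inj (map_prod \<phi> \<phi>)" using map_prod_inj_on[OF inj inj] by simp
  ultimately show ?thesis using card_image[OF inj_on_subset[OF \<open>inj (map_prod \<phi> \<phi>)\<close> subset_UNIV]] by simp
qed

lemma facemap_SP: "facemap \<sigma> \<phi> \<Longrightarrow> card (SP (\<phi> ` X)) = card (SP X)"
proof -
  assume fm: "facemap \<sigma> \<phi>"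
  then have b: "bij \<phi>" by (rule facemap_bij)
  then have inj: "inj \<phi>" by (rule bij_is_inj)
  have mem: "\<And>f. \<phi> f \<in> \<phi> ` X \<longleftrightarrow> f \<in> X" using inj by (simp add: inj_image_mem_iff)
  have adj: "\<And>f g. adjacent (\<phi> f) (\<phi> g) \<longleftrightarrow> adjacent f g" by (rule facemap_adj[OF fm])
  have "SP (\<phi> ` X) = \<phi> ` SP X"
  proof
    show "SP (\<phi> ` X) \<subseteq> \<phi> ` SP X"
    proof
      fix g' assume p0: "g' \<in> SP (\<phi> ` X)"
      obtain g where g: "g' = \<phi> g" using b by (metis bij_pointE)
      have h1: "\<phi> g \<notin> \<phi> ` X" "\<exists>f'\<in>\<phi> ` X. adjacent f' (\<phi> g)" using p0 unfolding g SP_def by blast+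
      then obtain f where f: "f \<in> X" "adjacent (\<phi> f) (\<phi> g)" by blast
      have "g \<notin> X" using h1(1) mem by simp
      then have "g \<in> SP X" using f adj unfolding SP_def by auto
      then show "g' \<in> \<phi> ` SP X" using g by blast
    qed
    show "\<phi> ` SP X \<subseteq> SP (\<phi> ` X)"
    proof
      fix p assume "p \<in> \<phi> ` SP X"
      then obtain g where g: "g \<in> SP X" "p = \<phi> g" by (rule imageE)
      then obtain f where f: "f \<in> X" "adjacent f g" "g \<notin> X" unfolding SP_def by blast
      have "\<phi> f \<in> \<phi> ` X" "\<phi> g \<notin> \<phi> ` X" "adjacent (\<phi> f) (\<phi> g)" using f mem adj by simp_all
      then show "p \<in> SP (\<phi> ` X)" unfolding SP_def g(2) by blast
    qed
  qed
  then show ?thesis using card_image[OF inj_on_subset[OF inj subset_UNIV]] by simp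
qed

lemma facemap_card: "facemap \<sigma> \<phi> \<Longrightarrow> card (\<phi> ` X) = card X"
  using card_image[OF inj_on_subset[OF bij_is_inj[OF facemap_bij] subset_UNIV]] by simp


lemma rotinv_coords[simp]: "fx (rotinv g) = fz g" "fy (rotinv g) = - fx g - 1" "fz (rotinv g) = fy g"
  using rotf_coords[of "rotinv g"] by simp_all

lemma rotf_band: "rotf ` band x0 x1 y0 y1 z0 z1 = band (-y1-1) (-y0-1) z0 z1 x0 x1"
proof
  show "rotf ` band x0 x1 y0 y1 z0 z1 \<subseteq> band (-y1-1) (-y0-1) z0 z1 x0 x1"
    unfolding band_def by auto
  show "band (-y1-1) (-y0-1) z0 z1 x0 x1 \<subseteq> rotf ` band x0 x1 y0 y1 z0 z1"
  proof
    fix g assume g: "g \<in> band (-y1-1) (-y0-1) z0 z1 x0 x1"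
    have "rotinv g \<in> band x0 x1 y0 y1 z0 z1" using g unfolding band_def by auto
    then show "g \<in> rotf ` band x0 x1 y0 y1 z0 z1" by (metis image_eqI rotf_rotinv(1))
  qed
qed

lemma reflf_band: "reflf ` band x0 x1 y0 y1 z0 z1 = band y0 y1 x0 x1 z0 z1"
proof
  show "reflf ` band x0 x1 y0 y1 z0 z1 \<subseteq> band y0 y1 x0 x1 z0 z1"
    unfolding band_def by auto
  show "band y0 y1 x0 x1 z0 z1 \<subseteq> reflf ` band x0 x1 y0 y1 z0 z1"
  proof
    fix g assume g: "g \<in> band y0 y1 x0 x1 z0 z1"
    have "reflf g \<in> band x0 x1 y0 y1 z0 z1" using g unfolding band_def by auto
    then show "g \<in> reflf ` band x0 x1 y0 y1 z0 z1" by (metis image_eqI reflf_reflf)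
  qed
qed

lemma transf_band: "transf (s,t) ` band x0 x1 y0 y1 z0 z1 = band (x0+s) (x1+s) (y0+t) (y1+t) (z0+s+t) (z1+s+t)"
proof
  show "transf (s,t) ` band x0 x1 y0 y1 z0 z1 \<subseteq> band (x0+s) (x1+s) (y0+t) (y1+t) (z0+s+t) (z1+s+t)"
    unfolding band_def by auto
  show "band (x0+s) (x1+s) (y0+t) (y1+t) (z0+s+t) (z1+s+t) \<subseteq> transf (s,t) ` band x0 x1 y0 y1 z0 z1"
  proof
    fix g assume g: "g \<in> band (x0+s) (x1+s) (y0+t) (y1+t) (z0+s+t) (z1+s+t)"
    have "transf (-s,-t) g \<in> band x0 x1 y0 y1 z0 z1" using g unfolding band_def by auto
    then show "g \<in> transf (s,t) ` band x0 x1 y0 y1 z0 z1" by (metis image_eqI transf_inv(2))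
  qed
qed

lemma G1set: "transf (d-c, -a) ` rotf ` Tb d a b c = Tb (2*d-a-b-c) (d-c-a) (d-a-b) (d-b-c)"
  unfolding Tb_def rotf_band transf_band by (simp add: algebra_simps)

lemma G2set: "reflf ` Tb d a b c = Tb d a c b"
  unfolding Tb_def reflf_band by simp

lemma vadd_assoc: "vadd (vadd a t) s = vadd a (vadd t s)" unfolding vadd_def by simp
lemma rot60_vadd: "rot60 (vadd a t) = vadd (rot60 a) (rot60 t)" unfolding vadd_def rot60_def by simp
lemma refl_vadd: "refl (vadd a t) = vadd (refl a) (refl t)" unfolding vadd_def refl_def by simp

lemma rot6: "rot60 ^^ 6 = id"
  by (rule ext) (simp add: rot60_def numeral_eq_Suc)

lemma rot_mod: "rot60 ^^ n = rot60 ^^ (n mod 6)"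
proof -
  have "rot60 ^^ n = rot60 ^^ (n mod 6 + 6 * (n div 6))" by simp
  also have "\<dots> = rot60 ^^ (n mod 6)" by (simp only: funpow_add funpow_mult[symmetric] rot6) simp
  finally show ?thesis .
qed

lemma refl_rot: "refl ((rot60 ^^ k) v) = (rot60 ^^ (5*k)) (refl v)"
proof (induction k arbitrary: v)
  case 0 then show ?case by simp
next
  case (Suc k)
  have r1: "refl (rot60 w) = (rot60 ^^ 5) (refl w)" for w
    by (cases w) (simp add: rot60_def refl_def numeral_eq_Suc)
  have "refl ((rot60 ^^ Suc k) v) = refl ((rot60 ^^ k) (rot60 v))" by (simp only: funpow_Suc_right comp_def)
  also have "\<dots> = (rot60 ^^ (5*k)) (refl (rot60 v))" using Suc by simp
  also have "\<dots> = (rot60 ^^ (5*k)) ((rot60 ^^ 5) (refl v))" using r1 by simp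
  also have "\<dots> = (rot60 ^^ (5 * k + 5)) (refl v)" by (simp only: funpow_add comp_apply)
  also have "\<dots> = (rot60 ^^ (5 * Suc k)) (refl v)" by (simp add: add.commute)
  finally show ?case .
qed

lemma refl_refl: "refl (refl v) = v" unfolding refl_def by simp

lemma LS_I1: "k < 6 \<Longrightarrow> (\<lambda>v. vadd ((rot60 ^^ k) v) t) \<in> lattice_symmetries"
  unfolding lattice_symmetries_def by blast
lemma LS_I2: "k < 6 \<Longrightarrow> (\<lambda>v. vadd ((rot60 ^^ k) (refl v)) t) \<in> lattice_symmetries"
  unfolding lattice_symmetries_def by blast

lemma LS_cases:
  assumes "\<sigma> \<in> lattice_symmetries"
  obtains k t where "\<sigma> = (\<lambda>v. vadd ((rot60 ^^ k) v) t)" | k t where "\<sigma> = (\<lambda>v. vadd ((rot60 ^^ k) (refl v)) t)"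
  using assms unfolding lattice_symmetries_def by blast

lemma LS_trans: "\<sigma> \<in> lattice_symmetries \<Longrightarrow> (\<lambda>v. vadd v s) \<circ> \<sigma> \<in> lattice_symmetries"
proof -
  assume "\<sigma> \<in> lattice_symmetries"
  then show ?thesis
  proof (cases rule: LS_cases)
    case (1 k t)
    have "(\<lambda>v. vadd v s) \<circ> \<sigma> = (\<lambda>v. vadd ((rot60 ^^ (k mod 6)) v) (vadd t s))"
      unfolding 1 comp_def vadd_assoc by (simp add: rot_mod[symmetric])
    then show ?thesis using LS_I1[of "k mod 6"] by simp
  next
    case (2 k t)
    have "(\<lambda>v. vadd v s) \<circ> \<sigma> = (\<lambda>v. vadd ((rot60 ^^ (k mod 6)) (refl v)) (vadd t s))"
      unfolding 2 comp_def vadd_assoc by (simp add: rot_mod[symmetric])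
    then show ?thesis using LS_I2[of "k mod 6"] by simp
  qed
qed

lemma LS_rot: "\<sigma> \<in> lattice_symmetries \<Longrightarrow> (\<lambda>v. vadd (rot60 v) s) \<circ> \<sigma> \<in> lattice_symmetries"
proof -
  assume "\<sigma> \<in> lattice_symmetries"
  then show ?thesis
  proof (cases rule: LS_cases)
    case (1 k t)
    have "(\<lambda>v. vadd (rot60 v) s) \<circ> \<sigma> = (\<lambda>v. vadd ((rot60 ^^ (Suc k mod 6)) v) (vadd (rot60 t) s))"
      unfolding 1 comp_def rot60_vadd vadd_assoc by (simp add: rot_mod[of "Suc k", symmetric])
    then show ?thesis using LS_I1[of "Suc k mod 6"] by simp
  next
    case (2 k t)
    have "(\<lambda>v. vadd (rot60 v) s) \<circ> \<sigma> = (\<lambda>v. vadd ((rot60 ^^ (Suc k mod 6)) (refl v)) (vadd (rot60 t) s))"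
      unfolding 2 comp_def rot60_vadd vadd_assoc by (simp add: rot_mod[of "Suc k", symmetric])
    then show ?thesis using LS_I2[of "Suc k mod 6"] by simp
  qed
qed

lemma LS_refl: "\<sigma> \<in> lattice_symmetries \<Longrightarrow> refl \<circ> \<sigma> \<in> lattice_symmetries"
proof -
  assume "\<sigma> \<in> lattice_symmetries"
  then show ?thesis
  proof (cases rule: LS_cases)
    case (1 k t)
    have "refl \<circ> \<sigma> = (\<lambda>v. vadd ((rot60 ^^ (5*k mod 6)) (refl v)) (refl t))"
      unfolding 1 comp_def refl_vadd refl_rot by (simp add: rot_mod[of "5*k", symmetric])
    then show ?thesis using LS_I2[of "5*k mod 6"] by simp
  next
    case (2 k t)
    have "refl \<circ> \<sigma> = (\<lambda>v. vadd ((rot60 ^^ (5*k mod 6)) v) (refl t))"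
      unfolding 2 comp_def refl_vadd refl_rot refl_refl by (simp add: rot_mod[of "5*k", symmetric])
    then show ?thesis using LS_I1[of "5*k mod 6"] by simp
  qed
qed

lemma facemap_trot: "facemap (\<lambda>v. vadd (rot60 v) s) (transf s \<circ> rotf)"
proof -
  have "facemap ((\<lambda>v. vadd v s) \<circ> (rot60 ^^ 1)) (transf s \<circ> rotf ^^ 1)"
    by (rule facemap_comp[OF facemap_trans facemap_rotk])
  then show ?thesis by (simp add: comp_def)
qed

lemma Q_closed:
  assumes X: "X \<in> quasi_regular" and fm: "facemap \<tau> \<psi>"
    and LSc: "\<And>\<sigma>. \<sigma> \<in> lattice_symmetries \<Longrightarrow> \<tau> \<circ> \<sigma> \<in> lattice_symmetries"
  shows "\<psi> ` X \<in> quasi_regular"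
proof -
  obtain \<sigma> H r where s: "X = face_image \<sigma> H" "\<sigma> \<in> lattice_symmetries" "r \<ge> 1"
    "H \<in> {E0 r, EB1 r, EB2 r, EB3 r, EB4 r, EB5 r}"
    using X unfolding quasi_regular_def by blast
  obtain \<phi> where \<phi>: "facemap \<sigma> \<phi>" using facemap_LS[OF s(2)] by blast
  have "\<psi> ` X = (\<psi> \<circ> \<phi>) ` H" unfolding s(1) face_image_facemap[OF \<phi>] by (simp add: image_comp)
  also have "\<dots> = face_image (\<tau> \<circ> \<sigma>) H" using face_image_facemap[OF facemap_comp[OF fm \<phi>]] by simp
  finally show ?thesis using LSc[OF s(2)] s(3,4) unfolding quasi_regular_def by blast
qed

lemma Q_transf: "X \<in> quasi_regular \<Longrightarrow> transf t ` X \<in> quasi_regular"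
  using Q_closed[OF _ facemap_trans LS_trans] by blast
lemma Q_trot: "X \<in> quasi_regular \<Longrightarrow> transf s ` rotf ` X \<in> quasi_regular"
  using Q_closed[OF _ facemap_trot LS_rot] by (simp add: image_comp)
lemma Q_refl: "X \<in> quasi_regular \<Longrightarrow> reflf ` X \<in> quasi_regular"
  using Q_closed[OF _ facemap_refl LS_refl] by blast

lemma Q_base: "r \<ge> 1 \<Longrightarrow> H \<in> {E0 r, EB1 r, EB2 r, EB3 r, EB4 r, EB5 r} \<Longrightarrow> H \<in> quasi_regular"
proof -
  assume a: "r \<ge> 1" "H \<in> {E0 r, EB1 r, EB2 r, EB3 r, EB4 r, EB5 r}"
  have ls: "(\<lambda>v. vadd ((rot60 ^^ 0) v) (0,0)) \<in> lattice_symmetries" by (rule LS_I1) simp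
  have fm: "facemap (\<lambda>v. vadd ((rot60 ^^ 0) v) (0,0)) (transf (0,0))"
    using facemap_trans[of "(0,0)"] by simp
  have "transf (0,0) ` H = H"
  proof -
    have "transf (0,0) f = f" for f by (metis face_ex transf.simps add_0_right)
    then show ?thesis by simp
  qed
  then have "face_image (\<lambda>v. vadd ((rot60 ^^ 0) v) (0,0)) H = H" using face_image_facemap[OF fm] by simp
  then show ?thesis using ls a unfolding quasi_regular_def by blast
qed

definition TQ :: "int \<Rightarrow> int \<Rightarrow> int \<Rightarrow> int \<Rightarrow> bool" where
  "TQ d a b c \<longleftrightarrow> Tb d a b c \<in> quasi_regular"

lemma TQ_swap: "TQ d a b c \<Longrightarrow> TQ d a c b"
  unfolding TQ_def using Q_refl G2set by metis

lemma TQ_rot: "TQ d a b c \<Longrightarrow> TQ (2*d-a-b-c) (d-c-a) (d-a-b) (d-b-c)"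
  unfolding TQ_def using Q_trot G1set by metis

lemma TQ_cyc: "TQ d a b c \<Longrightarrow> TQ d c a b"
proof -
  assume "TQ d a b c"
  then have "TQ (2*(2*d-a-b-c) - (d-c-a) - (d-a-b) - (d-b-c)) ((2*d-a-b-c) - (d-b-c) - (d-c-a))
     ((2*d-a-b-c) - (d-c-a) - (d-a-b)) ((2*d-a-b-c) - (d-a-b) - (d-b-c))"
    using TQ_rot by blast
  moreover have "(2*(2*d-a-b-c) - (d-c-a) - (d-a-b) - (d-b-c)) = d"
    "((2*d-a-b-c) - (d-b-c) - (d-c-a)) = c" "((2*d-a-b-c) - (d-c-a) - (d-a-b)) = a"
    "((2*d-a-b-c) - (d-a-b) - (d-b-c)) = b" by simp_all
  ultimately show ?thesis by simp
qed

lemma TQ_perms: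
  assumes "TQ d a b c"
  shows "TQ d a b c" "TQ d a c b" "TQ d b a c" "TQ d b c a" "TQ d c a b" "TQ d c b a"
  using assms TQ_swap TQ_cyc by metis+


lemma sq_le0: "(x::int)^2 \<le> 0 \<Longrightarrow> x = 0"
  by (simp add: power2_eq_square) (metis mult_eq_0_iff not_square_less_zero order_antisym_conv zero_le_square)

lemma sq_le2: "(x::int)^2 \<le> 2 \<Longrightarrow> x = -1 \<or> x = 0 \<or> x = 1"
proof (rule ccontr)
  assume a: "x^2 \<le> 2" "\<not> (x = -1 \<or> x = 0 \<or> x = 1)"
  then have "\<bar>x\<bar> \<ge> 2" by auto
  then have "\<bar>x\<bar> * \<bar>x\<bar> \<ge> 2 * 2" by (metis mult_mono abs_ge_zero zero_le_numeral)
  then have "x^2 \<ge> 4" by (simp add: power2_eq_square abs_mult[symmetric])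
  then show False using a by simp
qed

lemma diffsq0: "((p1::int)-p2)^2+(p2-p3)^2+(p1-p3)^2 = 3*(p1^2+p2^2+p3^2) - (p1+p2+p3)^2"
  by (simp add: power2_eq_square algebra_simps)
lemma diffsq: "(p1::int)+p2+p3 = s \<Longrightarrow> (p1-p2)^2+(p2-p3)^2+(p1-p3)^2 = 3*(p1^2+p2^2+p3^2) - s^2"
  using diffsq0 by metis

lemma p0_range:
  assumes "-6*p0^2 + 6*k*p0 - k^2 - 3*mu \<ge> (0::int)" "k \<ge> 0" "k^2 + 3*mu \<ge> -5"
  shows "0 \<le> p0 \<and> p0 \<le> k"
proof (rule ccontr)
  assume "\<not> (0 \<le> p0 \<and> p0 \<le> k)"
  then have "\<not> 0 \<le> p0 \<or> \<not> p0 \<le> k" by simp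
  then have "p0 * (p0 - k) \<ge> 1"
  proof
    assume "\<not> 0 \<le> p0"
    then have "(-p0) * (k - p0) \<ge> 1 * 1" using assms(2) by (intro mult_mono) auto
    then show ?thesis by (simp add: algebra_simps)
  next
    assume "\<not> p0 \<le> k"
    then have "p0 * (p0 - k) \<ge> 1 * 1" using assms(2) by (intro mult_mono) auto
    then show ?thesis by simp
  qed
  then have "-6*p0^2 + 6*k*p0 \<le> -6" by (simp add: power2_eq_square algebra_simps)
  then show False using assms by linarith
qed

lemma keyineq:
  assumes "p1+p2+p3 = 3*p0 - k" "p0^2 - (p1^2+p2^2+p3^2) \<ge> (mu::int)"
  shows "(p1-p2)^2+(p2-p3)^2+(p1-p3)^2 \<le> -6*p0^2 + 6*k*p0 - k^2 - 3*mu"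
proof -
  have "(p1-p2)^2+(p2-p3)^2+(p1-p3)^2 = 3*(p1^2+p2^2+p3^2) - (3*p0-k)^2" by (rule diffsq[OF assms(1)])
  also have "(3*p0-k)^2 = 9*p0^2 - 6*k*p0 + k^2" by (simp add: power2_eq_square algebra_simps)
  finally show ?thesis using assms(2) by (simp add: algebra_simps)
qed

lemma three_sq_nonneg: "(0::int) \<le> (p1-p2)^2+(p2-p3)^2+(p1-p3)^2" by simp

lemma diffs_small:
  assumes "(p1-p2)^2+(p2-p3)^2+(p1-p3)^2 \<le> (2::int)"
  shows "(p1-p2 = -1 \<or> p1-p2 = 0 \<or> p1-p2 = 1) \<and> (p2-p3 = -1 \<or> p2-p3 = 0 \<or> p2-p3 = 1) \<and>
    (p1-p3 = -1 \<or> p1-p3 = 0 \<or> p1-p3 = 1)"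
proof -
  have "(p1-p2)^2 \<le> 2" "(p2-p3)^2 \<le> 2" "(p1-p3)^2 \<le> 2" using assms
    by (smt (verit) zero_le_power2)+
  then show ?thesis using sq_le2 by blast
qed

lemma diffs_zero:
  assumes "(p1-p2)^2+(p2-p3)^2+(p1-p3)^2 \<le> (0::int)"
  shows "p1 = p2 \<and> p2 = p3"
proof -
  have "(p1-p2)^2 \<le> 0" "(p2-p3)^2 \<le> 0" using assms by (smt (verit) zero_le_power2)+
  then show ?thesis using sq_le0 by fastforce
qed

lemma small_abs:
  assumes "(p1-p2)^2+(p2-p3)^2+(p1-p3)^2 \<le> (2::int)"
  shows "\<bar>p1-p2\<bar> \<le> 1 \<and> \<bar>p2-p3\<bar> \<le> 1 \<and> \<bar>p1-p3\<bar> \<le> 1"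
  using diffs_small[OF assms] by auto

lemma core0:
  assumes "p1+p2+p3 = 3*p0 - 0" "p0^2 - (p1^2+p2^2+p3^2) \<ge> (0::int)"
  shows "p0 = 0 \<and> p1 = 0 \<and> p2 = 0 \<and> p3 = 0"
proof -
  note k = keyineq[OF assms]
  have "-6*p0^2 + 6*0*p0 - 0^2 - 3*0 \<ge> (0::int)" using k three_sq_nonneg[of p1 p2 p3] by linarith
  from p0_range[OF this] have r: "0 \<le> p0 \<and> p0 \<le> 0" by simp
  then have "p0 = 0" by simp
  then have "(p1-p2)^2+(p2-p3)^2+(p1-p3)^2 \<le> 0" using k by simp
  from diffs_zero[OF this] show ?thesis using assms(1) \<open>p0 = 0\<close> by presburger
qed

lemma core1:
  assumes "p1+p2+p3 = 3*p0 - 1" "p0^2 - (p1^2+p2^2+p3^2) \<ge> (-1::int)"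
  shows "(p0 = 0 \<and> ((p1 = -1 \<and> p2 = 0 \<and> p3 = 0) \<or> (p1 = 0 \<and> p2 = -1 \<and> p3 = 0) \<or> (p1 = 0 \<and> p2 = 0 \<and> p3 = -1))) \<or>
    (p0 = 1 \<and> ((p1 = 0 \<and> p2 = 1 \<and> p3 = 1) \<or> (p1 = 1 \<and> p2 = 0 \<and> p3 = 1) \<or> (p1 = 1 \<and> p2 = 1 \<and> p3 = 0)))"
proof -
  note k = keyineq[OF assms]
  have "-6*p0^2 + 6*1*p0 - 1^2 - 3*(-1) \<ge> (0::int)" using k three_sq_nonneg[of p1 p2 p3] by linarith
  from p0_range[OF this] have "0 \<le> p0 \<and> p0 \<le> 1" by simp
  then have "p0 = 0 \<or> p0 = 1" by auto
  then show ?thesis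
  proof (elim disjE)
    assume p0: "p0 = 0"
    then have "(p1-p2)^2+(p2-p3)^2+(p1-p3)^2 \<le> 2" using k by simp
    from small_abs[OF this] assms(1) p0 show ?thesis by presburger
  next
    assume p0: "p0 = 1"
    then have "(p1-p2)^2+(p2-p3)^2+(p1-p3)^2 \<le> 2" using k by simp
    from small_abs[OF this] assms(1) p0 show ?thesis by presburger
  qed
qed

lemma core2:
  assumes "p1+p2+p3 = 3*p0 - 2" "p0^2 - (p1^2+p2^2+p3^2) \<ge> (0::int)"
  shows "(p0 = 1 \<and> ((p1 = 0 \<and> p2 = 0 \<and> p3 = 1) \<or> (p1 = 0 \<and> p2 = 1 \<and> p3 = 0) \<or> (p1 = 1 \<and> p2 = 0 \<and> p3 = 0)))"
proof -
  note k = keyineq[OF assms]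
  have "-6*p0^2 + 6*2*p0 - 2^2 - 3*(0) \<ge> (0::int)" using k three_sq_nonneg[of p1 p2 p3] by linarith
  from p0_range[OF this] have "0 \<le> p0 \<and> p0 \<le> 2" by simp
  then have "p0 = 0 \<or> p0 = 1 \<or> p0 = 2" by auto
  then show ?thesis
  proof (elim disjE)
    assume p0: "p0 = 0"
    then have "(p1-p2)^2+(p2-p3)^2+(p1-p3)^2 \<le> -4" using k by simp
    then show ?thesis using three_sq_nonneg[of p1 p2 p3] by linarith
  next
    assume p0: "p0 = 1"
    then have "(p1-p2)^2+(p2-p3)^2+(p1-p3)^2 \<le> 2" using k by simp
    from small_abs[OF this] assms(1) p0 show ?thesis by presburger
  next
    assume p0: "p0 = 2"
    then have "(p1-p2)^2+(p2-p3)^2+(p1-p3)^2 \<le> -4" using k by simp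
    then show ?thesis using three_sq_nonneg[of p1 p2 p3] by linarith
  qed
qed

lemma core3:
  assumes "p1+p2+p3 = 3*p0 - 3" "p0^2 - (p1^2+p2^2+p3^2) \<ge> (1::int)"
  shows "(p0 = 1 \<and> ((p1 = 0 \<and> p2 = 0 \<and> p3 = 0))) \<or>
    (p0 = 2 \<and> ((p1 = 1 \<and> p2 = 1 \<and> p3 = 1)))"
proof -
  note k = keyineq[OF assms]
  have "-6*p0^2 + 6*3*p0 - 3^2 - 3*(1) \<ge> (0::int)" using k three_sq_nonneg[of p1 p2 p3] by linarith
  from p0_range[OF this] have "0 \<le> p0 \<and> p0 \<le> 3" by simp
  then have "p0 = 0 \<or> p0 = 1 \<or> p0 = 2 \<or> p0 = 3" by auto
  then show ?thesis
  proof (elim disjE)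
    assume p0: "p0 = 0"
    then have "(p1-p2)^2+(p2-p3)^2+(p1-p3)^2 \<le> -12" using k by simp
    then show ?thesis using three_sq_nonneg[of p1 p2 p3] by linarith
  next
    assume p0: "p0 = 1"
    then have "(p1-p2)^2+(p2-p3)^2+(p1-p3)^2 \<le> 0" using k by simp
    from diffs_zero[OF this] assms(1) p0 show ?thesis by presburger
  next
    assume p0: "p0 = 2"
    then have "(p1-p2)^2+(p2-p3)^2+(p1-p3)^2 \<le> 0" using k by simp
    from diffs_zero[OF this] assms(1) p0 show ?thesis by presburger
  next
    assume p0: "p0 = 3"
    then have "(p1-p2)^2+(p2-p3)^2+(p1-p3)^2 \<le> -12" using k by simp
    then show ?thesis using three_sq_nonneg[of p1 p2 p3] by linarith
  qed
qed

lemma core4: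
  assumes "p1+p2+p3 = 3*p0 - 4" "p0^2 - (p1^2+p2^2+p3^2) \<ge> (2::int)"
  shows "(p0 = 2 \<and> ((p1 = 0 \<and> p2 = 1 \<and> p3 = 1) \<or> (p1 = 1 \<and> p2 = 0 \<and> p3 = 1) \<or> (p1 = 1 \<and> p2 = 1 \<and> p3 = 0)))"
proof -
  note k = keyineq[OF assms]
  have "-6*p0^2 + 6*4*p0 - 4^2 - 3*(2) \<ge> (0::int)" using k three_sq_nonneg[of p1 p2 p3] by linarith
  from p0_range[OF this] have "0 \<le> p0 \<and> p0 \<le> 4" by simp
  then have "p0 = 0 \<or> p0 = 1 \<or> p0 = 2 \<or> p0 = 3 \<or> p0 = 4" by auto
  then show ?thesis
  proof (elim disjE)
    assume p0: "p0 = 0"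
    then have "(p1-p2)^2+(p2-p3)^2+(p1-p3)^2 \<le> -22" using k by simp
    then show ?thesis using three_sq_nonneg[of p1 p2 p3] by linarith
  next
    assume p0: "p0 = 1"
    then have "(p1-p2)^2+(p2-p3)^2+(p1-p3)^2 \<le> -4" using k by simp
    then show ?thesis using three_sq_nonneg[of p1 p2 p3] by linarith
  next
    assume p0: "p0 = 2"
    then have "(p1-p2)^2+(p2-p3)^2+(p1-p3)^2 \<le> 2" using k by simp
    from small_abs[OF this] assms(1) p0 show ?thesis by presburger
  next
    assume p0: "p0 = 3"
    then have "(p1-p2)^2+(p2-p3)^2+(p1-p3)^2 \<le> -4" using k by simp
    then show ?thesis using three_sq_nonneg[of p1 p2 p3] by linarith
  next
    assume p0: "p0 = 4"
    then have "(p1-p2)^2+(p2-p3)^2+(p1-p3)^2 \<le> -22" using k by simp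
    then show ?thesis using three_sq_nonneg[of p1 p2 p3] by linarith
  qed
qed

lemma core5:
  assumes "p1+p2+p3 = 3*p0 - 5" "p0^2 - (p1^2+p2^2+p3^2) \<ge> (3::int)"
  shows "(p0 = 2 \<and> ((p1 = 0 \<and> p2 = 0 \<and> p3 = 1) \<or> (p1 = 0 \<and> p2 = 1 \<and> p3 = 0) \<or> (p1 = 1 \<and> p2 = 0 \<and> p3 = 0))) \<or>
    (p0 = 3 \<and> ((p1 = 1 \<and> p2 = 1 \<and> p3 = 2) \<or> (p1 = 1 \<and> p2 = 2 \<and> p3 = 1) \<or> (p1 = 2 \<and> p2 = 1 \<and> p3 = 1)))"
proof -
  note k = keyineq[OF assms]
  have "-6*p0^2 + 6*5*p0 - 5^2 - 3*(3) \<ge> (0::int)" using k three_sq_nonneg[of p1 p2 p3] by linarith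
  from p0_range[OF this] have "0 \<le> p0 \<and> p0 \<le> 5" by simp
  then have "p0 = 0 \<or> p0 = 1 \<or> p0 = 2 \<or> p0 = 3 \<or> p0 = 4 \<or> p0 = 5" by auto
  then show ?thesis
  proof (elim disjE)
    assume p0: "p0 = 0"
    then have "(p1-p2)^2+(p2-p3)^2+(p1-p3)^2 \<le> -34" using k by simp
    then show ?thesis using three_sq_nonneg[of p1 p2 p3] by linarith
  next
    assume p0: "p0 = 1"
    then have "(p1-p2)^2+(p2-p3)^2+(p1-p3)^2 \<le> -10" using k by simp
    then show ?thesis using three_sq_nonneg[of p1 p2 p3] by linarith
  next
    assume p0: "p0 = 2"
    then have "(p1-p2)^2+(p2-p3)^2+(p1-p3)^2 \<le> 2" using k by simp
    from small_abs[OF this] assms(1) p0 show ?thesis by presburger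
  next
    assume p0: "p0 = 3"
    then have "(p1-p2)^2+(p2-p3)^2+(p1-p3)^2 \<le> 2" using k by simp
    from small_abs[OF this] assms(1) p0 show ?thesis by presburger
  next
    assume p0: "p0 = 4"
    then have "(p1-p2)^2+(p2-p3)^2+(p1-p3)^2 \<le> -10" using k by simp
    then show ?thesis using three_sq_nonneg[of p1 p2 p3] by linarith
  next
    assume p0: "p0 = 5"
    then have "(p1-p2)^2+(p2-p3)^2+(p1-p3)^2 \<le> -34" using k by simp
    then show ?thesis using three_sq_nonneg[of p1 p2 p3] by linarith
  qed
qed


lemma TQ_cong: "TQ d a b c \<Longrightarrow> d = d' \<Longrightarrow> a = a' \<Longrightarrow> b = b' \<Longrightarrow> c = c' \<Longrightarrow> TQ d' a' b' c'"
  by simp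

lemma TQ_rot': "TQ d a b c \<Longrightarrow> d' = 2*d-a-b-c \<Longrightarrow> a' = d-c-a \<Longrightarrow> b' = d-a-b \<Longrightarrow> c' = d-b-c \<Longrightarrow> TQ d' a' b' c'"
  using TQ_rot by simp

lemma base_TQ:
  fixes n :: nat
  assumes "n \<ge> 1"
  shows "TQ (3*int n) (int n) (int n) (int n)"
    "TQ (3*int n) (int n - 1) (int n) (int n)"
    "TQ (3*int n + 1) (int n) (int n) (int n + 1)"
    "TQ (3*int n + 1) (int n) (int n) (int n)"
    "TQ (3*int n + 2) (int n) (int n + 1) (int n + 1)"
    "TQ (3*int n + 2) (int n) (int n) (int n + 1)"
proof -
  have q: "\<And>H. H \<in> {E0 n, EB1 n, EB2 n, EB3 n, EB4 n, EB5 n} \<Longrightarrow> H \<in> quasi_regular" using Q_base assms by blast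
  have m1: "int (n - 1) = int n - 1" using assms by simp
  show "TQ (3*int n) (int n) (int n) (int n)" using q[of "E0 n"] unfolding TQ_def E0_def T_hex_Tb by (simp add: ac_simps)
  show "TQ (3*int n) (int n - 1) (int n) (int n)" using q[of "EB1 n"] unfolding TQ_def EB1_def T_hex_Tb m1 by (simp add: ac_simps)
  show "TQ (3*int n + 1) (int n) (int n) (int n + 1)" using q[of "EB2 n"] unfolding TQ_def EB2_def T_hex_Tb by (simp add: ac_simps)
  show "TQ (3*int n + 1) (int n) (int n) (int n)" using q[of "EB3 n"] unfolding TQ_def EB3_def T_hex_Tb by (simp add: ac_simps)
  show "TQ (3*int n + 2) (int n) (int n + 1) (int n + 1)" using q[of "EB4 n"] unfolding TQ_def EB4_def T_hex_Tb by (simp add: ac_simps)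
  show "TQ (3*int n + 2) (int n) (int n) (int n + 1)" using q[of "EB5 n"] unfolding TQ_def EB5_def T_hex_Tb by (simp add: ac_simps)
qed

lemma aux9: "0 \<le> 9*(X - 6*Y) \<Longrightarrow> 6*Y \<le> (X::int)" by presburger
lemma chain6: "H2 \<le> Q \<Longrightarrow> 6*Dv \<le> H2 \<Longrightarrow> m \<le> Dv \<Longrightarrow> 6*m \<le> (Q::int)" by linarith

lemma sixD: "9*((3*d-a-b-c)^2 - 6*(d*d-a*a-b*b-c*c)) = 6*((3*a-d)^2+(3*b-d)^2+(3*c-d)^2) + (3*a+3*b+3*c-3*d)^2" for a b c d :: int
  by (simp add: power2_eq_square algebra_simps)

lemma sixD_le: "6*(d*d-a*a-b*b-c*c) \<le> (3*d-a-b-c)^2" for a b c d :: int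
proof -
  have "0 \<le> 6*((3*a-d)^2+(3*b-d)^2+(3*c-d)^2) + (3*a+3*b+3*c-3*d)^2" by simp
  then have "0 \<le> 9*((3*d-a-b-c)^2 - 6*(d*d-a*a-b*b-c*c))" using sixD[of d a b c] by simp
  then show ?thesis using aux9 by blast
qed


lemma arith0:
  fixes d a b c :: int and n :: nat
  assumes n: "n \<ge> 1" and r: "r = int n"
    and v: "0 \<le> a" "0 \<le> b" "0 \<le> c" "a + b \<le> d" "b + c \<le> d" "a + c \<le> d"
    and H: "3*d-a-b-c \<le> 6*r + 0"
    and D: "d*d-a*a-b*b-c*c \<ge> 6*r*r + 0*r + (0)"
  shows "TQ d a b c \<and> d*d-a*a-b*b-c*c = 6*r*r + 0*r + (0)"
proof -
  have r1: "r \<ge> 1" using n r by simp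
  have H0: "0 \<le> 3*d-a-b-c" using v by linarith
  have HH: "3*d-a-b-c = 6*r + 0"
  proof (rule ccontr)
    assume "3*d-a-b-c \<noteq> 6*r + 0"
    then have "3*d-a-b-c \<le> 6*r + 0 - 1" using H by linarith
    then have "(3*d-a-b-c)^2 \<le> (6*r + 0 - 1)^2" using H0 by (intro power_mono) auto
    then have "6*(6*r*r + 0*r + (0)) \<le> (6*r + 0 - 1)^2" using chain6[OF _ sixD_le[of d a b c] D] by blast
    then show False using r1 by (simp add: power2_eq_square algebra_simps)
  qed
  define p0 where "p0 = d - 3*r"
  define p1 where "p1 = a - r"
  define p2 where "p2 = b - r"
  define p3 where "p3 = c - r"
  have dd: "d = 3*r + p0" "a = r + p1" "b = r + p2" "c = r + p3" unfolding p0_def p1_def p2_def p3_def by simp_all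
  have sum: "p1+p2+p3 = 3*p0 - 0" using HH unfolding dd by simp
  have Dexp: "d*d-a*a-b*b-c*c = 6*r*r + 2*r*(3*p0-p1-p2-p3) + (p0^2 - (p1^2+p2^2+p3^2))"
    unfolding dd by (simp add: power2_eq_square algebra_simps)
  have s3: "3*p0-p1-p2-p3 = 0" using sum by simp
  have h: "p0^2 - (p1^2+p2^2+p3^2) \<ge> (0::int)" using D unfolding Dexp s3 by simp
  from core0[OF sum h] have cs: "p0 = 0 \<and> p1 = 0 \<and> p2 = 0 \<and> p3 = 0" .
  have B0: "TQ (3*r) (r) (r) (r)" using base_TQ(1)[OF n] unfolding r by simp
  have mu_eq: "p0^2 - (p1^2+p2^2+p3^2) = 0" using cs by auto
  have DD: "d*d-a*a-b*b-c*c = 6*r*r + 0*r + (0)" using Dexp unfolding s3 mu_eq by simp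
  have "TQ d a b c"
    using cs TQ_perms(1)[OF B0] unfolding dd by simp
  then show ?thesis using DD by simp
qed


lemma arith1:
  fixes d a b c :: int and n :: nat
  assumes n: "n \<ge> 1" and r: "r = int n"
    and v: "0 \<le> a" "0 \<le> b" "0 \<le> c" "a + b \<le> d" "b + c \<le> d" "a + c \<le> d"
    and H: "3*d-a-b-c \<le> 6*r + 1"
    and D: "d*d-a*a-b*b-c*c \<ge> 6*r*r + 2*r + (-1)"
  shows "TQ d a b c \<and> d*d-a*a-b*b-c*c = 6*r*r + 2*r + (-1)"
proof -
  have r1: "r \<ge> 1" using n r by simp
  have H0: "0 \<le> 3*d-a-b-c" using v by linarith
  have HH: "3*d-a-b-c = 6*r + 1"
  proof (rule ccontr)
    assume "3*d-a-b-c \<noteq> 6*r + 1"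
    then have "3*d-a-b-c \<le> 6*r + 1 - 1" using H by linarith
    then have "(3*d-a-b-c)^2 \<le> (6*r + 1 - 1)^2" using H0 by (intro power_mono) auto
    then have "6*(6*r*r + 2*r + (-1)) \<le> (6*r + 1 - 1)^2" using chain6[OF _ sixD_le[of d a b c] D] by blast
    then show False using r1 by (simp add: power2_eq_square algebra_simps)
  qed
  define p0 where "p0 = d - 3*r"
  define p1 where "p1 = a - r"
  define p2 where "p2 = b - r"
  define p3 where "p3 = c - r"
  have dd: "d = 3*r + p0" "a = r + p1" "b = r + p2" "c = r + p3" unfolding p0_def p1_def p2_def p3_def by simp_all
  have sum: "p1+p2+p3 = 3*p0 - 1" using HH unfolding dd by simp
  have Dexp: "d*d-a*a-b*b-c*c = 6*r*r + 2*r*(3*p0-p1-p2-p3) + (p0^2 - (p1^2+p2^2+p3^2))"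
    unfolding dd by (simp add: power2_eq_square algebra_simps)
  have s3: "3*p0-p1-p2-p3 = 1" using sum by simp
  have h: "p0^2 - (p1^2+p2^2+p3^2) \<ge> (-1::int)" using D unfolding Dexp s3 by simp
  from core1[OF sum h] have cs: "(p0 = 0 \<and> ((p1 = -1 \<and> p2 = 0 \<and> p3 = 0) \<or> (p1 = 0 \<and> p2 = -1 \<and> p3 = 0) \<or> (p1 = 0 \<and> p2 = 0 \<and> p3 = -1))) \<or>
    (p0 = 1 \<and> ((p1 = 0 \<and> p2 = 1 \<and> p3 = 1) \<or> (p1 = 1 \<and> p2 = 0 \<and> p3 = 1) \<or> (p1 = 1 \<and> p2 = 1 \<and> p3 = 0)))" .
  have B0: "TQ (3*r) (r - 1) (r) (r)" using base_TQ(2)[OF n] unfolding r by simp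
  have B1: "TQ (3*r + 1) (r + 1) (r + 1) (r)" by (rule TQ_rot'[OF B0]) simp_all
  have mu_eq: "p0^2 - (p1^2+p2^2+p3^2) = -1" using cs by auto
  have DD: "d*d-a*a-b*b-c*c = 6*r*r + 2*r + (-1)" using Dexp unfolding s3 mu_eq by simp
  have "TQ d a b c"
    using cs
  proof (elim disjE conjE)
    assume "p0 = 0" "p1 = -1" "p2 = 0" "p3 = 0"
    then show ?thesis using TQ_perms(1)[OF B0] unfolding dd by (simp add: algebra_simps)
  next
    assume "p0 = 0" "p1 = 0" "p2 = -1" "p3 = 0"
    then show ?thesis using TQ_perms(3)[OF B0] unfolding dd by (simp add: algebra_simps)
  next
    assume "p0 = 0" "p1 = 0" "p2 = 0" "p3 = -1"
    then show ?thesis using TQ_perms(4)[OF B0] unfolding dd by (simp add: algebra_simps)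
  next
    assume "p0 = 1" "p1 = 0" "p2 = 1" "p3 = 1"
    then show ?thesis using TQ_perms(5)[OF B1] unfolding dd by (simp add: algebra_simps)
  next
    assume "p0 = 1" "p1 = 1" "p2 = 0" "p3 = 1"
    then show ?thesis using TQ_perms(2)[OF B1] unfolding dd by (simp add: algebra_simps)
  next
    assume "p0 = 1" "p1 = 1" "p2 = 1" "p3 = 0"
    then show ?thesis using TQ_perms(1)[OF B1] unfolding dd by (simp add: algebra_simps)
  qed
  then show ?thesis using DD by simp
qed


lemma arith2:
  fixes d a b c :: int and n :: nat
  assumes n: "n \<ge> 1" and r: "r = int n"
    and v: "0 \<le> a" "0 \<le> b" "0 \<le> c" "a + b \<le> d" "b + c \<le> d" "a + c \<le> d"
    and H: "3*d-a-b-c \<le> 6*r + 2"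
    and D: "d*d-a*a-b*b-c*c \<ge> 6*r*r + 4*r + (0)"
  shows "TQ d a b c \<and> d*d-a*a-b*b-c*c = 6*r*r + 4*r + (0)"
proof -
  have r1: "r \<ge> 1" using n r by simp
  have H0: "0 \<le> 3*d-a-b-c" using v by linarith
  have HH: "3*d-a-b-c = 6*r + 2"
  proof (rule ccontr)
    assume "3*d-a-b-c \<noteq> 6*r + 2"
    then have "3*d-a-b-c \<le> 6*r + 2 - 1" using H by linarith
    then have "(3*d-a-b-c)^2 \<le> (6*r + 2 - 1)^2" using H0 by (intro power_mono) auto
    then have "6*(6*r*r + 4*r + (0)) \<le> (6*r + 2 - 1)^2" using chain6[OF _ sixD_le[of d a b c] D] by blast
    then show False using r1 by (simp add: power2_eq_square algebra_simps)
  qed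
  define p0 where "p0 = d - 3*r"
  define p1 where "p1 = a - r"
  define p2 where "p2 = b - r"
  define p3 where "p3 = c - r"
  have dd: "d = 3*r + p0" "a = r + p1" "b = r + p2" "c = r + p3" unfolding p0_def p1_def p2_def p3_def by simp_all
  have sum: "p1+p2+p3 = 3*p0 - 2" using HH unfolding dd by simp
  have Dexp: "d*d-a*a-b*b-c*c = 6*r*r + 2*r*(3*p0-p1-p2-p3) + (p0^2 - (p1^2+p2^2+p3^2))"
    unfolding dd by (simp add: power2_eq_square algebra_simps)
  have s3: "3*p0-p1-p2-p3 = 2" using sum by simp
  have h: "p0^2 - (p1^2+p2^2+p3^2) \<ge> (0::int)" using D unfolding Dexp s3 by simp
  from core2[OF sum h] have cs: "(p0 = 1 \<and> ((p1 = 0 \<and> p2 = 0 \<and> p3 = 1) \<or> (p1 = 0 \<and> p2 = 1 \<and> p3 = 0) \<or> (p1 = 1 \<and> p2 = 0 \<and> p3 = 0)))" .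
  have B0: "TQ (3*r + 1) (r) (r) (r + 1)" using base_TQ(3)[OF n] unfolding r by simp
  have mu_eq: "p0^2 - (p1^2+p2^2+p3^2) = 0" using cs by auto
  have DD: "d*d-a*a-b*b-c*c = 6*r*r + 4*r + (0)" using Dexp unfolding s3 mu_eq by simp
  have "TQ d a b c"
    using cs
  proof (elim disjE conjE)
    assume "p0 = 1" "p1 = 0" "p2 = 0" "p3 = 1"
    then show ?thesis using TQ_perms(1)[OF B0] unfolding dd by (simp add: algebra_simps)
  next
    assume "p0 = 1" "p1 = 0" "p2 = 1" "p3 = 0"
    then show ?thesis using TQ_perms(2)[OF B0] unfolding dd by (simp add: algebra_simps)
  next
    assume "p0 = 1" "p1 = 1" "p2 = 0" "p3 = 0"
    then show ?thesis using TQ_perms(5)[OF B0] unfolding dd by (simp add: algebra_simps)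
  qed
  then show ?thesis using DD by simp
qed


lemma arith3:
  fixes d a b c :: int and n :: nat
  assumes n: "n \<ge> 1" and r: "r = int n"
    and v: "0 \<le> a" "0 \<le> b" "0 \<le> c" "a + b \<le> d" "b + c \<le> d" "a + c \<le> d"
    and H: "3*d-a-b-c \<le> 6*r + 3"
    and D: "d*d-a*a-b*b-c*c \<ge> 6*r*r + 6*r + (1)"
  shows "TQ d a b c \<and> d*d-a*a-b*b-c*c = 6*r*r + 6*r + (1)"
proof -
  have r1: "r \<ge> 1" using n r by simp
  have H0: "0 \<le> 3*d-a-b-c" using v by linarith
  have HH: "3*d-a-b-c = 6*r + 3"
  proof (rule ccontr)
    assume "3*d-a-b-c \<noteq> 6*r + 3"
    then have "3*d-a-b-c \<le> 6*r + 3 - 1" using H by linarith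
    then have "(3*d-a-b-c)^2 \<le> (6*r + 3 - 1)^2" using H0 by (intro power_mono) auto
    then have "6*(6*r*r + 6*r + (1)) \<le> (6*r + 3 - 1)^2" using chain6[OF _ sixD_le[of d a b c] D] by blast
    then show False using r1 by (simp add: power2_eq_square algebra_simps)
  qed
  define p0 where "p0 = d - 3*r"
  define p1 where "p1 = a - r"
  define p2 where "p2 = b - r"
  define p3 where "p3 = c - r"
  have dd: "d = 3*r + p0" "a = r + p1" "b = r + p2" "c = r + p3" unfolding p0_def p1_def p2_def p3_def by simp_all
  have sum: "p1+p2+p3 = 3*p0 - 3" using HH unfolding dd by simp
  have Dexp: "d*d-a*a-b*b-c*c = 6*r*r + 2*r*(3*p0-p1-p2-p3) + (p0^2 - (p1^2+p2^2+p3^2))"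
    unfolding dd by (simp add: power2_eq_square algebra_simps)
  have s3: "3*p0-p1-p2-p3 = 3" using sum by simp
  have h: "p0^2 - (p1^2+p2^2+p3^2) \<ge> (1::int)" using D unfolding Dexp s3 by simp
  from core3[OF sum h] have cs: "(p0 = 1 \<and> ((p1 = 0 \<and> p2 = 0 \<and> p3 = 0))) \<or>
    (p0 = 2 \<and> ((p1 = 1 \<and> p2 = 1 \<and> p3 = 1)))" .
  have B0: "TQ (3*r + 1) (r) (r) (r)" using base_TQ(4)[OF n] unfolding r by simp
  have B1: "TQ (3*r + 2) (r + 1) (r + 1) (r + 1)" by (rule TQ_rot'[OF B0]) simp_all
  have mu_eq: "p0^2 - (p1^2+p2^2+p3^2) = 1" using cs by auto
  have DD: "d*d-a*a-b*b-c*c = 6*r*r + 6*r + (1)" using Dexp unfolding s3 mu_eq by simp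
  have "TQ d a b c"
    using cs
  proof (elim disjE conjE)
    assume "p0 = 1" "p1 = 0" "p2 = 0" "p3 = 0"
    then show ?thesis using TQ_perms(1)[OF B0] unfolding dd by (simp add: algebra_simps)
  next
    assume "p0 = 2" "p1 = 1" "p2 = 1" "p3 = 1"
    then show ?thesis using TQ_perms(1)[OF B1] unfolding dd by (simp add: algebra_simps)
  qed
  then show ?thesis using DD by simp
qed


lemma arith4:
  fixes d a b c :: int and n :: nat
  assumes n: "n \<ge> 1" and r: "r = int n"
    and v: "0 \<le> a" "0 \<le> b" "0 \<le> c" "a + b \<le> d" "b + c \<le> d" "a + c \<le> d"
    and H: "3*d-a-b-c \<le> 6*r + 4"
    and D: "d*d-a*a-b*b-c*c \<ge> 6*r*r + 8*r + (2)"
  shows "TQ d a b c \<and> d*d-a*a-b*b-c*c = 6*r*r + 8*r + (2)"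
proof -
  have r1: "r \<ge> 1" using n r by simp
  have H0: "0 \<le> 3*d-a-b-c" using v by linarith
  have HH: "3*d-a-b-c = 6*r + 4"
  proof (rule ccontr)
    assume "3*d-a-b-c \<noteq> 6*r + 4"
    then have "3*d-a-b-c \<le> 6*r + 4 - 1" using H by linarith
    then have "(3*d-a-b-c)^2 \<le> (6*r + 4 - 1)^2" using H0 by (intro power_mono) auto
    then have "6*(6*r*r + 8*r + (2)) \<le> (6*r + 4 - 1)^2" using chain6[OF _ sixD_le[of d a b c] D] by blast
    then show False using r1 by (simp add: power2_eq_square algebra_simps)
  qed
  define p0 where "p0 = d - 3*r"
  define p1 where "p1 = a - r"
  define p2 where "p2 = b - r"
  define p3 where "p3 = c - r"
  have dd: "d = 3*r + p0" "a = r + p1" "b = r + p2" "c = r + p3" unfolding p0_def p1_def p2_def p3_def by simp_all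
  have sum: "p1+p2+p3 = 3*p0 - 4" using HH unfolding dd by simp
  have Dexp: "d*d-a*a-b*b-c*c = 6*r*r + 2*r*(3*p0-p1-p2-p3) + (p0^2 - (p1^2+p2^2+p3^2))"
    unfolding dd by (simp add: power2_eq_square algebra_simps)
  have s3: "3*p0-p1-p2-p3 = 4" using sum by simp
  have h: "p0^2 - (p1^2+p2^2+p3^2) \<ge> (2::int)" using D unfolding Dexp s3 by simp
  from core4[OF sum h] have cs: "(p0 = 2 \<and> ((p1 = 0 \<and> p2 = 1 \<and> p3 = 1) \<or> (p1 = 1 \<and> p2 = 0 \<and> p3 = 1) \<or> (p1 = 1 \<and> p2 = 1 \<and> p3 = 0)))" .
  have B0: "TQ (3*r + 2) (r) (r + 1) (r + 1)" using base_TQ(5)[OF n] unfolding r by simp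
  have mu_eq: "p0^2 - (p1^2+p2^2+p3^2) = 2" using cs by auto
  have DD: "d*d-a*a-b*b-c*c = 6*r*r + 8*r + (2)" using Dexp unfolding s3 mu_eq by simp
  have "TQ d a b c"
    using cs
  proof (elim disjE conjE)
    assume "p0 = 2" "p1 = 0" "p2 = 1" "p3 = 1"
    then show ?thesis using TQ_perms(1)[OF B0] unfolding dd by (simp add: algebra_simps)
  next
    assume "p0 = 2" "p1 = 1" "p2 = 0" "p3 = 1"
    then show ?thesis using TQ_perms(3)[OF B0] unfolding dd by (simp add: algebra_simps)
  next
    assume "p0 = 2" "p1 = 1" "p2 = 1" "p3 = 0"
    then show ?thesis using TQ_perms(4)[OF B0] unfolding dd by (simp add: algebra_simps)
  qed
  then show ?thesis using DD by simp
qed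


lemma arith5:
  fixes d a b c :: int and n :: nat
  assumes n: "n \<ge> 1" and r: "r = int n"
    and v: "0 \<le> a" "0 \<le> b" "0 \<le> c" "a + b \<le> d" "b + c \<le> d" "a + c \<le> d"
    and H: "3*d-a-b-c \<le> 6*r + 5"
    and D: "d*d-a*a-b*b-c*c \<ge> 6*r*r + 10*r + (3)"
  shows "TQ d a b c \<and> d*d-a*a-b*b-c*c = 6*r*r + 10*r + (3)"
proof -
  have r1: "r \<ge> 1" using n r by simp
  have H0: "0 \<le> 3*d-a-b-c" using v by linarith
  have HH: "3*d-a-b-c = 6*r + 5"
  proof (rule ccontr)
    assume "3*d-a-b-c \<noteq> 6*r + 5"
    then have "3*d-a-b-c \<le> 6*r + 5 - 1" using H by linarith
    then have "(3*d-a-b-c)^2 \<le> (6*r + 5 - 1)^2" using H0 by (intro power_mono) auto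
    then have "6*(6*r*r + 10*r + (3)) \<le> (6*r + 5 - 1)^2" using chain6[OF _ sixD_le[of d a b c] D] by blast
    then show False using r1 by (simp add: power2_eq_square algebra_simps)
  qed
  define p0 where "p0 = d - 3*r"
  define p1 where "p1 = a - r"
  define p2 where "p2 = b - r"
  define p3 where "p3 = c - r"
  have dd: "d = 3*r + p0" "a = r + p1" "b = r + p2" "c = r + p3" unfolding p0_def p1_def p2_def p3_def by simp_all
  have sum: "p1+p2+p3 = 3*p0 - 5" using HH unfolding dd by simp
  have Dexp: "d*d-a*a-b*b-c*c = 6*r*r + 2*r*(3*p0-p1-p2-p3) + (p0^2 - (p1^2+p2^2+p3^2))"
    unfolding dd by (simp add: power2_eq_square algebra_simps)
  have s3: "3*p0-p1-p2-p3 = 5" using sum by simp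
  have h: "p0^2 - (p1^2+p2^2+p3^2) \<ge> (3::int)" using D unfolding Dexp s3 by simp
  from core5[OF sum h] have cs: "(p0 = 2 \<and> ((p1 = 0 \<and> p2 = 0 \<and> p3 = 1) \<or> (p1 = 0 \<and> p2 = 1 \<and> p3 = 0) \<or> (p1 = 1 \<and> p2 = 0 \<and> p3 = 0))) \<or>
    (p0 = 3 \<and> ((p1 = 1 \<and> p2 = 1 \<and> p3 = 2) \<or> (p1 = 1 \<and> p2 = 2 \<and> p3 = 1) \<or> (p1 = 2 \<and> p2 = 1 \<and> p3 = 1)))" .
  have B0: "TQ (3*r + 2) (r) (r) (r + 1)" using base_TQ(6)[OF n] unfolding r by simp
  have B1: "TQ (3*r + 3) (r + 1) (r + 2) (r + 1)" by (rule TQ_rot'[OF B0]) simp_all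
  have mu_eq: "p0^2 - (p1^2+p2^2+p3^2) = 3" using cs by auto
  have DD: "d*d-a*a-b*b-c*c = 6*r*r + 10*r + (3)" using Dexp unfolding s3 mu_eq by simp
  have "TQ d a b c"
    using cs
  proof (elim disjE conjE)
    assume "p0 = 2" "p1 = 0" "p2 = 0" "p3 = 1"
    then show ?thesis using TQ_perms(1)[OF B0] unfolding dd by (simp add: algebra_simps)
  next
    assume "p0 = 2" "p1 = 0" "p2 = 1" "p3 = 0"
    then show ?thesis using TQ_perms(2)[OF B0] unfolding dd by (simp add: algebra_simps)
  next
    assume "p0 = 2" "p1 = 1" "p2 = 0" "p3 = 0"
    then show ?thesis using TQ_perms(5)[OF B0] unfolding dd by (simp add: algebra_simps)
  next
    assume "p0 = 3" "p1 = 1" "p2 = 1" "p3 = 2"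
    then show ?thesis using TQ_perms(2)[OF B1] unfolding dd by (simp add: algebra_simps)
  next
    assume "p0 = 3" "p1 = 1" "p2 = 2" "p3 = 1"
    then show ?thesis using TQ_perms(1)[OF B1] unfolding dd by (simp add: algebra_simps)
  next
    assume "p0 = 3" "p1 = 2" "p2 = 1" "p3 = 1"
    then show ?thesis using TQ_perms(3)[OF B1] unfolding dd by (simp add: algebra_simps)
  qed
  then show ?thesis using DD by simp
qed


definition mu :: "nat \<Rightarrow> int" where
  "mu k = (if k = 0 then 0 else if k = 1 then -1 else if k = 2 then 0 else if k = 3 then 1 else if k = 4 then 2 else 3)"

lemma card_img_band_le:
  assumes "x0 \<le> x1 + 1" "k ` S \<subseteq> {x0..x1}"
  shows "int (card (k ` S)) \<le> x1 - x0 + 1"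
proof -
  have "card (k ` S) \<le> card {x0..x1}" using assms(2) by (intro card_mono) auto
  then show ?thesis using assms by simp
qed

lemma HH_band_le:
  assumes "x0 \<le> x1 + 1" "y0 \<le> y1 + 1" "z0 \<le> z1 + 1"
  shows "int (HH (band x0 x1 y0 y1 z0 z1)) \<le> (x1-x0+1) + (y1-y0+1) + (z1-z0+1)"
proof -
  have "int (card (fx ` band x0 x1 y0 y1 z0 z1)) \<le> x1-x0+1"
    by (rule card_img_band_le[OF assms(1)]) (auto simp: band_def)
  moreover have "int (card (fy ` band x0 x1 y0 y1 z0 z1)) \<le> y1-y0+1"
    by (rule card_img_band_le[OF assms(2)]) (auto simp: band_def)
  moreover have "int (card (fz ` band x0 x1 y0 y1 z0 z1)) \<le> z1-z0+1"
    by (rule card_img_band_le[OF assms(3)]) (auto simp: band_def)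
  ultimately show ?thesis unfolding HH_def by simp
qed

lemma That_props:
  fixes d a b c :: nat
  assumes "a + b \<le> d" "b + c \<le> d" "a + c \<le> d"
  shows "int (card (BP (T_hex d a b c))) \<le> 3*int d - int a - int b - int c"
    "int (card (SP (T_hex d a b c))) \<le> 3*int d - int a - int b - int c"
    "int (card (T_hex d a b c)) = int d * int d - int a * int a - int b * int b - int c * int c"
proof -
  let ?B = "band 0 (int d - int b - 1) 0 (int d - int c - 1) (int a) (int d - 1)"
  have eq: "T_hex d a b c = ?B" unfolding T_hex_Tb Tb_def by simp
  have hh: "int (HH ?B) \<le> 3*int d - int a - int b - int c"
    using HH_band_le[of 0 "int d - int b - 1" 0 "int d - int c - 1" "int a" "int d - 1"] assms by simp
  show "int (card (BP (T_hex d a b c))) \<le> 3*int d - int a - int b - int c"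
    unfolding eq using upper_edge[of 0 "int d - int b - 1" 0 "int d - int c - 1" "int a" "int d - 1"] hh by linarith
  show "int (card (SP (T_hex d a b c))) \<le> 3*int d - int a - int b - int c"
    unfolding eq using upper_site[of 0 "int d - int b - 1" 0 "int d - int c - 1" "int a" "int d - 1"] hh by linarith
  show "int (card (T_hex d a b c)) = int d * int d - int a * int a - int b * int b - int c * int c"
    unfolding T_hex_Tb by (rule card_Tb) (use assms in simp_all)
qed

lemma shape_props:
  assumes n: "n \<ge> 1" and H: "H \<in> {E0 n, EB1 n, EB2 n, EB3 n, EB4 n, EB5 n}"
  shows "\<exists>k\<le>5. int (card (BP H)) \<le> 6*int n + int k \<and> int (card (SP H)) \<le> 6*int n + int k \<and>
           int (card H) = 6*int n*int n + 2*int k*int n + mu k"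
proof -
  have m1: "int (n - 1) = int n - 1" using n by simp
  consider "H = E0 n" | "H = EB1 n" | "H = EB2 n" | "H = EB3 n" | "H = EB4 n" | "H = EB5 n" using H by blast
  then show ?thesis
  proof cases
    case 1
    note p = That_props[of n n "3*n" n]
    show ?thesis using p unfolding 1 E0_def by (intro exI[of _ 0]) (simp add: mu_def algebra_simps)
  next
    case 2
    note p = That_props[of "n-1" n "3*n" n]
    show ?thesis using p n unfolding 2 EB1_def by (intro exI[of _ 1]) (simp add: mu_def algebra_simps m1)
  next
    case 3
    note p = That_props[of n n "3*n+1" "n+1"]
    show ?thesis using p unfolding 3 EB2_def by (intro exI[of _ 2]) (simp add: mu_def algebra_simps)
  next
    case 4
    note p = That_props[of n n "3*n+1" n]
    show ?thesis using p unfolding 4 EB3_def by (intro exI[of _ 3]) (simp add: mu_def algebra_simps)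
  next
    case 5
    note p = That_props[of n "n+1" "3*n+2" "n+1"]
    show ?thesis using p unfolding 5 EB4_def by (intro exI[of _ 4]) (simp add: mu_def algebra_simps)
  next
    case 6
    note p = That_props[of n n "3*n+2" "n+1"]
    show ?thesis using p unfolding 6 EB5_def by (intro exI[of _ 5]) (simp add: mu_def algebra_simps)
  qed
qed

lemma E_props:
  assumes "E \<in> quasi_regular"
  shows "\<exists>n k. n \<ge> 1 \<and> k \<le> 5 \<and> int (edge_perimeter E) \<le> 6*int n + int k \<and> int (site_perimeter E) \<le> 6*int n + int k \<and>
           int (area E) = 6*int n*int n + 2*int k*int n + mu k"
proof -
  obtain \<sigma> H n where s: "E = face_image \<sigma> H" "\<sigma> \<in> lattice_symmetries" "n \<ge> 1"
    "H \<in> {E0 n, EB1 n, EB2 n, EB3 n, EB4 n, EB5 n}"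
    using assms unfolding quasi_regular_def by blast
  obtain \<phi> where \<phi>: "facemap \<sigma> \<phi>" using facemap_LS[OF s(2)] by blast
  have E: "E = \<phi> ` H" using s(1) face_image_facemap[OF \<phi>] by simp
  have "edge_perimeter E = card (BP H)" unfolding edge_perimeter_BP E using facemap_BP[OF \<phi>] by simp
  moreover have "site_perimeter E = card (SP H)" unfolding site_perimeter_SP E using facemap_SP[OF \<phi>] by simp
  moreover have "area E = card H" unfolding area_def E using facemap_card[OF \<phi>] by simp
  ultimately show ?thesis using shape_props[OF s(3,4)] s(3) by auto
qed

lemma arith_all:
  fixes d a b c :: int and n k :: nat
  assumes "n \<ge> 1" "k \<le> 5"
    and v: "0 \<le> a" "0 \<le> b" "0 \<le> c" "a + b \<le> d" "b + c \<le> d" "a + c \<le> d"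
    and H: "3*d-a-b-c \<le> 6*int n + int k"
    and D: "d*d-a*a-b*b-c*c \<ge> 6*int n*int n + 2*int k*int n + mu k"
  shows "TQ d a b c \<and> d*d-a*a-b*b-c*c = 6*int n*int n + 2*int k*int n + mu k"
proof -
  have "k = 0 \<or> k = 1 \<or> k = 2 \<or> k = 3 \<or> k = 4 \<or> k = 5" using assms(2) by auto
  then show ?thesis
  proof (elim disjE)
    assume k: "k = 0" show ?thesis using arith0[OF assms(1) refl v] H D unfolding k mu_def by simp
  next
    assume k: "k = 1" show ?thesis using arith1[OF assms(1) refl v] H D unfolding k mu_def by simp
  next
    assume k: "k = 2" show ?thesis using arith2[OF assms(1) refl v] H D unfolding k mu_def by simp
  next
    assume k: "k = 3" show ?thesis using arith3[OF assms(1) refl v] H D unfolding k mu_def by simp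
  next
    assume k: "k = 4" show ?thesis using arith4[OF assms(1) refl v] H D unfolding k mu_def by simp
  next
    assume k: "k = 5" show ?thesis using arith5[OF assms(1) refl v] H D unfolding k mu_def by simp
  qed
qed

lemma P_in_Q:
  assumes P: "polyiamond P" and n: "n \<ge> 1" and k: "k \<le> 5"
    and H: "int (HH P) \<le> 6*int n + int k"
    and A: "int (card P) \<ge> 6*int n*int n + 2*int k*int n + mu k"
  shows "P \<in> quasi_regular"
proof -
  have fin: "finite P" and ne: "P \<noteq> {}" using P unfolding polyiamond_def by auto
  define x0 where "x0 = Min (fx ` P)"
  define x1 where "x1 = Max (fx ` P)"
  define y0 where "y0 = Min (fy ` P)"
  define y1 where "y1 = Max (fy ` P)"
  define z0 where "z0 = Min (fz ` P)"
  define z1 where "z1 = Max (fz ` P)"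
  have finx: "finite (fx ` P)" "fx ` P \<noteq> {}" using fin ne by auto
  have finy: "finite (fy ` P)" "fy ` P \<noteq> {}" using fin ne by auto
  have finz: "finite (fz ` P)" "fz ` P \<noteq> {}" using fin ne by auto
  obtain fX0 where fX0: "fX0 \<in> P" "fx fX0 = x0" using Min_in[OF finx] unfolding x0_def by auto
  obtain fX1 where fX1: "fX1 \<in> P" "fx fX1 = x1" using Max_in[OF finx] unfolding x1_def by auto
  obtain fY0 where fY0: "fY0 \<in> P" "fy fY0 = y0" using Min_in[OF finy] unfolding y0_def by auto
  obtain fY1 where fY1: "fY1 \<in> P" "fy fY1 = y1" using Max_in[OF finy] unfolding y1_def by auto
  obtain fZ0 where fZ0: "fZ0 \<in> P" "fz fZ0 = z0" using Min_in[OF finz] unfolding z0_def by auto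
  obtain fZ1 where fZ1: "fZ1 \<in> P" "fz fZ1 = z1" using Max_in[OF finz] unfolding z1_def by auto
  have bx: "\<And>f. f \<in> P \<Longrightarrow> x0 \<le> fx f \<and> fx f \<le> x1" unfolding x0_def x1_def using finx by auto
  have by': "\<And>f. f \<in> P \<Longrightarrow> y0 \<le> fy f \<and> fy f \<le> y1" unfolding y0_def y1_def using finy by auto
  have bz: "\<And>f. f \<in> P \<Longrightarrow> z0 \<le> fz f \<and> fz f \<le> z1" unfolding z0_def z1_def using finz by auto
  let ?R = "band x0 x1 y0 y1 z0 z1"
  have sub: "P \<subseteq> ?R" using bx by' bz unfolding band_def by auto
  have cx: "int (card (fx ` P)) = x1 - x0 + 1" unfolding x0_def x1_def
    by (rule conn_card[OF P]) (use adj_coord_le1 in auto)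
  have cy: "int (card (fy ` P)) = y1 - y0 + 1" unfolding y0_def y1_def
    by (rule conn_card[OF P]) (use adj_coord_le1 in auto)
  have cz: "int (card (fz ` P)) = z1 - z0 + 1" unfolding z0_def z1_def
    by (rule conn_card[OF P]) (use adj_coord_le1 in auto)
  define d where "d = z1 - x0 - y0 + 1"
  define a where "a = z0 - x0 - y0"
  define b where "b = d - (x1 - x0 + 1)"
  define c where "c = d - (y1 - y0 + 1)"
  have r1: "fx fX1 + fy fX1 \<le> fz fX1" "fx fY1 + fy fY1 \<le> fz fY1" "fx fZ0 + fy fZ0 \<le> fz fZ0"
    "fz fY0 \<le> fx fY0 + fy fY0 + 1" "fz fX0 \<le> fx fX0 + fy fX0 + 1" "fz fZ1 \<le> fx fZ1 + fy fZ1 + 1"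
    using fz_range by auto
  have v: "0 \<le> a" "0 \<le> b" "0 \<le> c" "a + b \<le> d" "b + c \<le> d" "a + c \<le> d"
    using r1 bx[OF fX1(1)] by'[OF fX1(1)] bz[OF fX1(1)] bx[OF fY1(1)] by'[OF fY1(1)] bz[OF fY1(1)]
      bx[OF fZ0(1)] by'[OF fZ0(1)] bz[OF fZ0(1)] bx[OF fY0(1)] by'[OF fY0(1)] bz[OF fY0(1)]
      bx[OF fX0(1)] by'[OF fX0(1)] bz[OF fX0(1)] bx[OF fZ1(1)] by'[OF fZ1(1)] bz[OF fZ1(1)]
      fX0(2) fX1(2) fY0(2) fY1(2) fZ0(2) fZ1(2)
    unfolding a_def b_def c_def d_def by linarith+
  have Req: "?R = transf (x0,y0) ` Tb d a b c"
    unfolding band_transf[of x0 x1 y0 y1 z0 z1] Tb_def a_def b_def c_def d_def by (simp add: algebra_simps)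
  have cR: "int (card ?R) = d*d - a*a - b*b - c*c"
    unfolding Req using card_image[OF inj_on_subset[OF inj_transf subset_UNIV]] card_Tb[OF v] by simp
  have HHd: "3*d-a-b-c \<le> 6*int n + int k" using H cx cy cz unfolding HH_def a_def b_def c_def d_def by simp
  have cPR: "card P \<le> card ?R" using card_mono[OF finite_band sub] .
  have ar: "TQ d a b c \<and> d*d-a*a-b*b-c*c = 6*int n*int n + 2*int k*int n + mu k"
    using arith_all[OF n k v HHd] cR cPR A by linarith
  have "card P = card ?R" using ar cR cPR A by linarith
  then have "P = ?R" using card_subset_eq[OF finite_band sub] by simp
  also have "?R \<in> quasi_regular" unfolding Req using ar Q_transf unfolding TQ_def by blast
  finally show ?thesis .
qed

theorem lemma7p5:
  assumes "E \<in> quasi_regular"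
    and "polyiamond P"
    and "P \<notin> quasi_regular"
    and "area P \<ge> area E"
  shows "edge_perimeter P > edge_perimeter E \<and> site_perimeter P > site_perimeter E"
proof -
  obtain n k where nk: "n \<ge> 1" "k \<le> 5" "int (edge_perimeter E) \<le> 6*int n + int k"
    "int (site_perimeter E) \<le> 6*int n + int k" "int (area E) = 6*int n*int n + 2*int k*int n + mu k"
    using E_props[OF assms(1)] by blast
  have fin: "finite P" using assms(2) unfolding polyiamond_def by simp
  have A: "int (card P) \<ge> 6*int n*int n + 2*int k*int n + mu k" using nk(5) assms(4) unfolding area_def by linarith
  have l1: "HH P \<le> edge_perimeter P" unfolding edge_perimeter_BP using lower_edge[OF fin] .
  have l2: "HH P \<le> site_perimeter P" unfolding site_perimeter_SP using lower_site[OF fin] .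
  show ?thesis
  proof (rule conjI; rule ccontr)
    assume "\<not> edge_perimeter E < edge_perimeter P"
    then have "int (HH P) \<le> 6*int n + int k" using l1 nk(3) by linarith
    then have "P \<in> quasi_regular" using P_in_Q[OF assms(2) nk(1,2) _ A] by blast
    then show False using assms(3) by blast
  next
    assume "\<not> site_perimeter E < site_perimeter P"
    then have "int (HH P) \<le> 6*int n + int k" using l2 nk(4) by linarith
    then have "P \<in> quasi_regular" using P_in_Q[OF assms(2) nk(1,2) _ A] by blast
    then show False using assms(3) by blast
  qed
qed


end
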